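(* Assume $q>2$. In $K_\infty$: $$\zeta_C^\star(q-1,1)=\zeta_C(q-1,1)+\zeta_C(1)^q=\zeta_C(1)\zeta_C(q-1)-\zeta_C(1,q-1)=\zeta_C(1)\left(\zeta_C(q-1)-\frac{\zeta_C(1)^{q-1}}{\theta-\theta^q}\right),$$ and this value equals $\sum_{d\ge0}\Big(\sum_{a\in A^+(d)}a^{-q}C_a\Big)(1)$.
   Context: $A=\mathbb{F}_q[\theta]$, $A^+(d)$ monic polynomials of degree $d$, $K_\infty=\mathbb{F}_q((1/\theta))$. $\zeta_C(n)=\sum_{a\in A^+}a^{-n}$; $\zeta_C(n_1,n_2)=\sum_{\deg a_1>\deg a_2}a_1^{-n_1}a_2^{-n_2}$ ($a_i\in A^+$); $\zeta_C^\star(n_1,n_2)=\sum_{\deg a_1\ge\deg a_2}a_1^{-n_1}a_2^{-n_2}$. $K\{\tau\}$ is the skew polynomial ring over $K=\mathbb{F}_q(\theta)$ with $\tau c=c^q\tau$; $C_a$ is the Carlitz module ($\mathbb{F}_q$-algebra homomorphism $A\to K\{\tau\}$ with $C_\theta=\theta+\tau$); for $f=\sum_if_i\tau^i\in K\{\tau\}$, $f(1)=\sum_if_i$. *)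

theory Defs
  imports "HOL-Computational_Algebra.Polynomial" "HOL-Computational_Algebra.Formal_Laurent_Series"
begin

text \<open>Base field F_q: a finite field type 'a, q = CARD('a).
  A = F_q[theta] is 'a poly.  K_infinity = F_q((1/theta)) is 'a fls, the formal Laurent
  series in the variable X = 1/theta; the library metric on 'a fls is the (1/theta)-adic one,
  i.e. the topology of K_infinity.  theta itself is X^(-1).\<close>

definition theta :: "'a::field fls" where
  "theta = fls_X_inv"

definition A_to_Kinf :: "'a::field poly \<Rightarrow> 'a fls" where
  "A_to_Kinf p = (\<Sum>i\<le>degree p. fls_const (coeff p i) * theta ^ i)"

definition monic_deg :: "nat \<Rightarrow> 'a::field poly set" where
  "monic_deg d = {a. degree a = d \<and> lead_coeff a = 1}"

definition pow_sum :: "nat \<Rightarrow> nat \<Rightarrow> 'a::{finite,field} fls" where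
  "pow_sum n d = (\<Sum>a\<in>monic_deg d. inverse (A_to_Kinf a) ^ n)"

definition zetaC :: "nat \<Rightarrow> 'a::{finite,field} fls" where
  "zetaC n = (\<Sum>d. pow_sum n d)"

definition zetaC2 :: "nat \<Rightarrow> nat \<Rightarrow> 'a::{finite,field} fls" where
  "zetaC2 n1 n2 = (\<Sum>d. pow_sum n1 d * (\<Sum>e<d. pow_sum n2 e))"

definition zetaC2_star :: "nat \<Rightarrow> nat \<Rightarrow> 'a::{finite,field} fls" where
  "zetaC2_star n1 n2 = (\<Sum>d. pow_sum n1 d * (\<Sum>e\<le>d. pow_sum n2 e))"

text \<open>Skew polynomials sum_i f_i tau^i with coefficients in K (taken inside K_infinity),
  represented by their coefficient sequence nat => 'a fls (finite support).
  Multiplication uses tau c = c^q tau.\<close>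
type_synonym 'a skew = "nat \<Rightarrow> 'a fls"

definition skew_mult :: "nat \<Rightarrow> 'a::field skew \<Rightarrow> 'a skew \<Rightarrow> 'a skew" where
  "skew_mult q f g = (\<lambda>k. \<Sum>i\<le>k. f i * (g (k - i)) ^ (q ^ i))"

definition skew_one :: "'a::field skew" where
  "skew_one = (\<lambda>i. if i = 0 then 1 else 0)"

definition skew_scal :: "'a::field fls \<Rightarrow> 'a skew \<Rightarrow> 'a skew" where
  "skew_scal c f = (\<lambda>i. c * f i)"

definition skew_eval :: "'a::field skew \<Rightarrow> 'a fls" where
  "skew_eval f = (\<Sum>i | f i \<noteq> 0. f i)"

definition carlitz_theta :: "'a::field skew" where
  "carlitz_theta = (\<lambda>i. if i = 0 then theta else if i = 1 then 1 else 0)"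

definition carlitz :: "'a::{finite,field} poly \<Rightarrow> 'a skew" where
  "carlitz a = (\<lambda>k. \<Sum>i\<le>degree a. fls_const (coeff a i) *
                  ((skew_mult (card (UNIV :: 'a set)) carlitz_theta ^^ i) skew_one) k)"

definition skew_sum :: "('b \<Rightarrow> 'a::field skew) \<Rightarrow> 'b set \<Rightarrow> 'a skew" where
  "skew_sum F S = (\<lambda>k. \<Sum>x\<in>S. F x k)"

end

theory Submission
  imports Defs
begin


lemma card_ge2: "2 \<le> card (UNIV :: 'a::{finite,field} set)"
proof -
  have "{0::'a, 1} \<subseteq> UNIV" by simp
  hence "card {0::'a,1} \<le> card (UNIV::'a set)" by (intro card_mono) auto
  thus ?thesis by simp
qed

lemma fin_pow: fixes c :: "'a::{finite,field}" shows "c ^ card (UNIV::'a set) = c"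
proof (cases "c = 0")
  case True thus ?thesis using card_ge2[where 'a='a] by simp
next
  case False
  define U where "U = UNIV - {0::'a}"
  have "(\<Prod>x\<in>U. c * x) = (\<Prod>x\<in>U. x)"
  proof (rule prod.reindex_bij_betw)
    show "bij_betw ((*) c) U U" unfolding U_def using False
      by (intro bij_betwI[where g="\<lambda>x. x / c"]) auto
  qed
  moreover have "(\<Prod>x\<in>U. c * x) = c ^ card U * (\<Prod>x\<in>U. x)"
    by (simp add: prod.distrib)
  moreover have "(\<Prod>x\<in>U. x) \<noteq> 0" unfolding U_def by simp
  ultimately have "c ^ card U = 1" by simp
  moreover have "card U = card (UNIV::'a set) - 1" unfolding U_def by (simp add: card_Diff_singleton)
  ultimately have "c ^ (card (UNIV::'a set) - 1) = 1" by simp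
  hence "c * c ^ (card (UNIV::'a set) - 1) = c" by simp
  moreover have "Suc (card (UNIV::'a set) - 1) = card (UNIV::'a set)" using card_ge2[where 'a='a] by simp
  ultimately show ?thesis by (metis power_Suc)
qed

lemma poly_zero_fin:
  fixes p :: "'a::{finite,field} poly"
  assumes "degree p < card (UNIV::'a set)" "\<And>c. poly p c = 0" shows "p = 0"
proof (rule ccontr)
  assume "p \<noteq> 0"
  hence "card {x. poly p x = 0} \<le> degree p" by (rule card_poly_roots_bound)
  moreover have "{x. poly p x = 0} = UNIV" using assms by auto
  ultimately show False using assms by simp
qed

lemma binom_zero:
  assumes "0 < k" "k < card (UNIV :: 'a::{finite,field} set)"
  shows "(of_nat (card (UNIV::'a set) choose k) :: 'a) = 0"
proof -
  define n where "n = card (UNIV::'a set)"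
  define P :: "'a poly" where "P = [:1,1:]^n - [:0,1:]^n - 1"
  have n2: "n \<ge> 2" unfolding n_def by (rule card_ge2)
  have d1: "degree ([:1::'a,1:]^n) \<le> n" by (rule order.trans[OF degree_power_le]) simp
  have d2: "degree ([:0::'a,1:]^n) \<le> n" by (rule order.trans[OF degree_power_le]) simp
  have dP: "degree P \<le> n" unfolding P_def
    by (intro degree_diff_le d1 order.trans[OF degree_diff_le]) (use d1 d2 in auto)
  have cP: "coeff P n = 0" unfolding P_def using n2
    by (simp add: coeff_linear_poly_power coeff_diff)
  have "degree P < n"
  proof (rule ccontr)
    assume "\<not> degree P < n" hence "degree P = n" using dP by simp
    hence "P = 0" using cP by (metis leading_coeff_0_iff)
    thus False using \<open>degree P = n\<close> n2 by simp
  qed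
  moreover have "poly P c = 0" for c
    unfolding P_def by (simp add: poly_power n_def fin_pow add.commute)
  ultimately have "P = 0" using poly_zero_fin n_def by blast
  hence "coeff P k = 0" by simp
  moreover have "(0::'a) ^ (n - k) = 0" using assms n_def by simp
  ultimately show ?thesis using assms unfolding P_def n_def
    by (simp add: coeff_linear_poly_power coeff_diff)
qed


lemma of_nat_card_zero: "(of_nat (card (UNIV::'a set)) :: 'a::{finite,field}) = 0"
proof -
  have "(\<Sum>c\<in>UNIV. c + 1) = (\<Sum>c\<in>(UNIV::'a set). c)"
    by (rule sum.reindex_bij_betw) (auto intro!: bij_betwI[where g="\<lambda>x. x - 1"])
  thus ?thesis by (simp add: sum.distrib)
qed

lemma of_nat_card_zero_fls: "(of_nat (card (UNIV::'a set)) :: 'a::{finite,field} fls) = 0"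
  by (simp add: fls_of_nat of_nat_card_zero)

lemma frob_add: fixes x y :: "'a::{finite,field} fls"
  shows "(x + y) ^ card (UNIV::'a set) = x ^ card (UNIV::'a set) + y ^ card (UNIV::'a set)"
proof -
  define n where "n = card (UNIV::'a set)"
  have n2: "n \<ge> 2" unfolding n_def by (rule card_ge2)
  define f where "f k = of_nat (n choose k) * x ^ k * y ^ (n - k)" for k
  have "(x + y) ^ n = (\<Sum>k\<le>n. f k)" unfolding f_def by (rule binomial_ring)
  also have "\<dots> = (\<Sum>k\<in>{0,n}. f k)"
  proof (rule sum.mono_neutral_cong_right)
    show "\<forall>i\<in>{..n} - {0, n}. f i = 0"
    proof
      fix i assume "i \<in> {..n} - {0, n}"
      hence "0 < i" "i < n" by auto
      hence "(of_nat (n choose i) :: 'a) = 0" using binom_zero n_def by blast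
      thus "f i = 0" unfolding f_def by (simp add: fls_of_nat)
    qed
  qed auto
  also have "\<dots> = x ^ n + y ^ n" using n2 by (simp add: f_def)
  finally show ?thesis unfolding n_def .
qed

lemma frob_sum: fixes f :: "'b \<Rightarrow> 'a::{finite,field} fls"
  shows "(\<Sum>i\<in>A. f i) ^ card (UNIV::'a set) = (\<Sum>i\<in>A. f i ^ card (UNIV::'a set))"
proof (induction A rule: infinite_finite_induct)
  case (infinite A) thus ?case using card_ge2[where 'a='a] by simp
next
  case empty thus ?case using card_ge2[where 'a='a] by simp
next
  case (insert x F) thus ?case by (simp add: frob_add)
qed

lemma frob_uminus: fixes x :: "'a::{finite,field} fls"
  shows "(- x) ^ card (UNIV::'a set) = - (x ^ card (UNIV::'a set))"
proof -
  have "0 = (x + - x) ^ card (UNIV::'a set)" using card_ge2[where 'a='a] by simp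
  also have "\<dots> = x ^ card (UNIV::'a set) + (- x) ^ card (UNIV::'a set)" by (rule frob_add)
  finally show ?thesis by (simp add: eq_neg_iff_add_eq_0 add.commute)
qed

lemma frob_diff: fixes x y :: "'a::{finite,field} fls"
  shows "(x - y) ^ card (UNIV::'a set) = x ^ card (UNIV::'a set) - y ^ card (UNIV::'a set)"
  using frob_add[of x "-y"] frob_uminus[of y] by simp

lemma frob_const: "(fls_const (c::'a::{finite,field})) ^ card (UNIV::'a set) = fls_const c"
  by (simp add: fls_const_power[symmetric] fin_pow)

lemma frob_cmult: fixes x :: "'a::{finite,field} fls"
  shows "(fls_const c * x) ^ card (UNIV::'a set) = fls_const c * x ^ card (UNIV::'a set)"
  by (simp add: power_mult_distrib frob_const)

lemma frob_inj: fixes x y :: "'a::{finite,field} fls"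
  assumes "x ^ card (UNIV::'a set) = y ^ card (UNIV::'a set)" shows "x = y"
  using assms frob_diff[of x y] by simp

lemma frobn_add: fixes x y :: "'a::{finite,field} fls"
  shows "(x + y) ^ (card (UNIV::'a set) ^ j) = x ^ (card (UNIV::'a set) ^ j) + y ^ (card (UNIV::'a set) ^ j)"
  by (induction j) (simp_all add: power_mult frob_add mult.commute[of "card UNIV"])

lemma frobn_cmult: fixes x :: "'a::{finite,field} fls"
  shows "(fls_const c * x) ^ (card (UNIV::'a set) ^ j) = fls_const c * x ^ (card (UNIV::'a set) ^ j)"
  by (induction j) (simp_all add: power_mult frob_cmult mult.commute[of "card UNIV"])

lemma frobn_sum: fixes f :: "'b \<Rightarrow> 'a::{finite,field} fls"
  shows "(\<Sum>i\<in>A. f i) ^ (card (UNIV::'a set) ^ j) = (\<Sum>i\<in>A. f i ^ (card (UNIV::'a set) ^ j))"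
  by (induction j) (simp_all add: power_mult frob_sum mult.commute[of "card UNIV"])

lemma minus_one_pow_qm1: "(-1 :: 'a::{finite,field} fls) ^ (card (UNIV::'a set) - 1) = 1"
proof -
  have "(-1 :: 'a fls) ^ card (UNIV::'a set) = -1" using frob_uminus[of "1::'a fls"] by simp
  moreover have "card (UNIV::'a set) = Suc (card (UNIV::'a set) - 1)" using card_ge2[where 'a='a] by simp
  ultimately have "- ((-1 :: 'a fls) ^ (card (UNIV::'a set) - 1)) = -1" by (metis power_Suc mult_minus1)
  thus ?thesis by simp
qed


lemma coeff_prod_lin:
  assumes "finite S"
  shows "coeff (\<Prod>s\<in>S. [:fls_const (g s), 1:]) k = fls_const (coeff (\<Prod>s\<in>S. [:g s, 1:]) k)"
  using assms
proof (induction S arbitrary: k rule: finite_induct)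
  case empty thus ?case by (simp add: coeff_1)
next
  case (insert x F)
  have e: "[:a, 1:] * p = smult a p + pCons 0 p" for a :: "'z::comm_ring_1" and p
    by (simp add: mult_pCons_left)
  show ?case using insert
    by (cases k) (simp_all add: e fls_plus_const[symmetric])
qed

lemma poly_prod_lin:
  "(\<Prod>c\<in>UNIV. [:c, 1:]) = (monom 1 (card (UNIV::'a set)) - monom 1 1 :: 'a::{finite,field} poly)"
proof -
  define n where "n = card (UNIV::'a set)"
  have n2: "n \<ge> 2" unfolding n_def by (rule card_ge2)
  define P :: "'a poly" where "P = (\<Prod>c\<in>UNIV. [:c, 1:])"
  define D where "D = P - (monom 1 n - monom 1 1)"
  have dP: "degree P = n" unfolding P_def n_def
    by (subst degree_prod_eq_sum_degree) auto
  have lP0: "lead_coeff P = 1" using lead_coeff_prod[of "\<lambda>c. [:c, 1:]" UNIV] unfolding P_def by simp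
  have lP: "coeff P n = 1" using lP0 dP by metis
  have m1: "degree (monom (1::'a) n) \<le> n" "degree (monom (1::'a) 1) \<le> n" using n2 by (simp_all add: degree_monom_eq)
  have dM: "degree (monom (1::'a) n - monom 1 1) \<le> n"
    by (intro degree_diff_le m1)
  have dD: "degree D \<le> n" unfolding D_def using dP dM by (metis degree_diff_le order.refl)
  have cD: "coeff D n = 0" unfolding D_def using lP n2 by (simp add: coeff_diff)
  have "degree D < n"
  proof (rule ccontr)
    assume "\<not> degree D < n" hence "degree D = n" using dD by simp
    hence "D = 0" using cD by (metis leading_coeff_0_iff)
    thus False using \<open>degree D = n\<close> n2 by simp
  qed
  moreover have "poly D c = 0" for c
  proof -
    have "poly P c = 0" unfolding P_def poly_prod
      by (rule prod_zero) (auto intro!: bexI[of _ "-c"] exI[of _ "-c"])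
    thus ?thesis unfolding D_def by (simp add: poly_monom n_def fin_pow)
  qed
  ultimately have "D = 0" using poly_zero_fin n_def by blast
  thus ?thesis unfolding D_def P_def n_def by simp
qed

lemma poly_prod_lin_fls:
  "(\<Prod>c\<in>UNIV. [:fls_const c, 1:]) = (monom 1 (card (UNIV::'a set)) - monom 1 1 :: 'a::{finite,field} fls poly)"
proof (rule poly_eqI)
  fix k
  show "coeff (\<Prod>c\<in>UNIV. [:fls_const c, 1:]) k = coeff (monom 1 (card (UNIV::'a set)) - monom 1 1 :: 'a fls poly) k"
    by (subst coeff_prod_lin[where g="\<lambda>c. c", simplified]) (auto simp: poly_prod_lin coeff_monom)
qed

lemma prod_lin: fixes t :: "'a::{finite,field} fls"
  shows "(\<Prod>c\<in>UNIV. t + fls_const c) = t ^ card (UNIV::'a set) - t"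
proof -
  have "poly (\<Prod>c\<in>UNIV. [:fls_const c, 1:]) t = (\<Prod>c\<in>UNIV. t + fls_const c)"
    by (simp add: poly_prod add.commute)
  thus ?thesis by (simp add: poly_prod_lin_fls poly_monom)
qed

lemma prod_lin_deriv: fixes t :: "'a::{finite,field} fls"
  shows "(\<Sum>c\<in>UNIV. \<Prod>c'\<in>UNIV - {c}. t + fls_const c') = -1"
proof -
  have "pderiv (\<Prod>c\<in>UNIV. [:fls_const c, 1:]) = (\<Sum>c\<in>UNIV. (\<Prod>c'\<in>UNIV - {c}. [:fls_const c', 1:]))"
    by (simp add: pderiv_prod pderiv_pCons)
  moreover have "pderiv (\<Prod>c\<in>UNIV. [:fls_const c, 1:]) = (-1 :: 'a fls poly)"
    by (simp add: poly_prod_lin_fls pderiv_diff pderiv_monom of_nat_card_zero_fls)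
  ultimately have "(\<Sum>c\<in>UNIV. (\<Prod>c'\<in>UNIV - {c}. [:fls_const c', 1:])) = (-1 :: 'a fls poly)" by metis
  hence "poly (\<Sum>c\<in>UNIV. (\<Prod>c'\<in>UNIV - {c}. [:fls_const c', 1:])) t = -1" by simp
  thus ?thesis by (simp add: poly_sum poly_prod add.commute)
qed

lemma sum_inv_lin: fixes t :: "'a::{finite,field} fls"
  assumes "t ^ card (UNIV::'a set) \<noteq> t"
  shows "(\<Sum>c\<in>UNIV. inverse (t + fls_const c)) = - inverse (t ^ card (UNIV::'a set) - t)"
proof -
  define P where "P = (\<Prod>c\<in>UNIV. t + fls_const c)"
  have P: "P = t ^ card (UNIV::'a set) - t" unfolding P_def by (rule prod_lin)
  have P0: "P \<noteq> 0" using assms P by simp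
  have "inverse (t + fls_const c) = (\<Prod>c'\<in>UNIV - {c}. t + fls_const c') / P" for c
  proof -
    define R where "R = (\<Prod>c'\<in>UNIV - {c}. t + fls_const c')"
    have e: "P = (t + fls_const c) * R"
      unfolding P_def R_def by (simp add: prod.remove)
    hence "t + fls_const c \<noteq> 0" "R \<noteq> 0" using P0 by auto
    thus ?thesis unfolding R_def[symmetric] e by (simp add: inverse_mult_distrib divide_inverse)
  qed
  hence "(\<Sum>c\<in>UNIV. inverse (t + fls_const c)) = (\<Sum>c\<in>UNIV. \<Prod>c'\<in>UNIV - {c}. t + fls_const c') / P"
    by (simp add: sum_divide_distrib)
  also have "\<dots> = - inverse P" by (simp add: prod_lin_deriv divide_inverse)
  finally show ?thesis using P by simp
qed

lemma prod_lin_nonzero: fixes t :: "'a::{finite,field} fls"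
  assumes "t ^ card (UNIV::'a set) \<noteq> t" shows "t + fls_const c \<noteq> 0"
  using assms prod_lin[of t] by (metis (no_types, lifting) UNIV_I finite right_minus_eq prod_zero_iff)


lemma fin_pown: "(c::'a::{finite,field}) ^ (card (UNIV::'a set) ^ k) = c"
  by (induction k) (simp_all add: power_mult fin_pow mult.commute[of "card UNIV"])

lemma frobn_const: "(fls_const (c::'a::{finite,field})) ^ (card (UNIV::'a set) ^ k) = fls_const c"
  by (simp add: fls_const_power[symmetric] fin_pown)

lemma frobn_diff: fixes x y :: "'a::{finite,field} fls"
  shows "(x - y) ^ (card (UNIV::'a set) ^ j) = x ^ (card (UNIV::'a set) ^ j) - y ^ (card (UNIV::'a set) ^ j)"
  by (induction j) (simp_all add: power_mult frob_diff mult.commute[of "card UNIV"])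

lemma fixed_in_F: fixes t :: "'a::{finite,field} fls"
  assumes "t ^ card (UNIV::'a set) = t" shows "\<exists>e. t = fls_const e"
proof -
  have "(\<Prod>c\<in>UNIV. t + fls_const c) = 0" using assms by (simp add: prod_lin)
  then obtain c where "t + fls_const c = 0" by auto
  hence "t = fls_const (-c)" by (simp add: eq_neg_iff_add_eq_0)
  thus ?thesis by blast
qed

lemma inv_pow_pred: fixes x :: "'b::field"
  assumes "x \<noteq> 0" "0 < n" shows "inverse x ^ (n - 1) = x * inverse (x ^ n)"
proof -
  obtain m where n: "n = Suc m" using assms(2) by (cases n) auto
  have "x * inverse (x ^ n) = x * (inverse x * inverse (x ^ m))"
    by (simp add: n inverse_mult_distrib)
  also have "\<dots> = inverse x ^ m" using assms(1) by (simp add: power_inverse)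
  finally show ?thesis by (simp add: n)
qed

lemma sum_inv_lin_qm1: fixes t :: "'a::{finite,field} fls"
  assumes "t ^ card (UNIV::'a set) \<noteq> t"
  shows "(\<Sum>c\<in>UNIV. inverse (t + fls_const c) ^ (card (UNIV::'a set) - 1)) = inverse (t ^ card (UNIV::'a set) - t) ^ (card (UNIV::'a set) - 1)"
proof -
  define q where "q = card (UNIV::'a set)"
  have q2: "q \<ge> 2" unfolding q_def by (rule card_ge2)
  have qs: "q = Suc (q - 1)" using q2 by simp
  define u where "u = t ^ q"
  define s where "s = t ^ q - t"
  have s0: "s \<noteq> 0" using assms unfolding s_def q_def by simp
  have u: "u ^ q \<noteq> u" unfolding u_def q_def using s0 s_def q_def frob_diff[of "t^q" t, folded q_def] by force
  have uq: "u ^ q - u = s ^ q" unfolding u_def s_def q_def by (simp add: frob_diff)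
  have tc: "t + fls_const c \<noteq> 0" for c using prod_lin_nonzero assms by blast
  have "inverse (t + fls_const c) ^ (q - 1) = 1 + (t - u) * inverse (u + fls_const c)" for c
  proof -
    have uc: "u + fls_const c \<noteq> 0" using prod_lin_nonzero u q_def by blast
    have "(t + fls_const c) ^ q = u + fls_const c" unfolding u_def q_def by (simp add: frob_add frob_const)
    hence "inverse (t + fls_const c) ^ (q - 1) = (t + fls_const c) * inverse (u + fls_const c)"
      using inv_pow_pred[OF tc[of c], of q] q2 by simp
    also have "\<dots> = ((u + fls_const c) + (t - u)) * inverse (u + fls_const c)" by simp
    also have "\<dots> = 1 + (t - u) * inverse (u + fls_const c)" using uc by (subst distrib_right) simp
    finally show ?thesis .
  qed
  hence "(\<Sum>c\<in>UNIV. inverse (t + fls_const c) ^ (q - 1)) = (\<Sum>c\<in>UNIV. 1 + (t - u) * inverse (u + fls_const c))"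
    by simp
  also have "\<dots> = of_nat q + (t - u) * (\<Sum>c\<in>UNIV. inverse (u + fls_const c))"
    by (simp add: sum.distrib sum_distrib_left q_def)
  also have "\<dots> = (t - u) * (- inverse (s ^ q))"
    using sum_inv_lin[of u] u uq of_nat_card_zero_fls unfolding q_def by simp
  also have "\<dots> = s * inverse (s ^ q)" proof - have tu: "t - u = - s" unfolding s_def u_def by simp show ?thesis by (simp add: tu) qed
  also have "\<dots> = inverse s ^ (q - 1)"
    using inv_pow_pred[OF s0, of q] q2 by simp
  finally show ?thesis unfolding q_def s_def by simp
qed

lemma fls_const_sum: "fls_const (\<Sum>i\<in>A. f i) = (\<Sum>i\<in>A. fls_const (f i))"
  by (rule fls_eqI) (simp add: fls_nth_sum)

lemma sum_pow_F: fixes m :: nat assumes "m > 0"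
  shows "(\<Sum>c\<in>(UNIV::'a::{finite,field} set). c ^ (card (UNIV::'a set) ^ m - 1)) = -1"
proof -
  define q where "q = card (UNIV::'a set)"
  have q2: "q \<ge> 2" unfolding q_def by (rule card_ge2)
  have qm: "q ^ m \<ge> 2" using q2 assms by (metis le_trans power_increasing_iff self_le_power one_le_numeral
       Suc_1 Suc_leI not_gr0 power_one_right zero_less_Suc)
  have e: "c ^ (q ^ m - 1) = (if c = 0 then 0 else 1)" for c :: 'a
  proof (cases "c = 0")
    case True thus ?thesis using qm by simp
  next
    case False
    have "c * c ^ (q ^ m - 1) = c * 1"
      using fin_pown[of c m] qm unfolding q_def[symmetric] by (metis power_Suc Suc_diff_1 not_gr0 not_numeral_le_zero mult_1_right le_0_eq)
    thus ?thesis using False by simp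
  qed
  have "(\<Sum>c\<in>(UNIV::'a set). c ^ (q ^ m - 1)) = 0 ^ (q ^ m - 1) + (\<Sum>c\<in>UNIV - {0}. c ^ (q ^ m - 1))"
    by (simp add: sum.remove)
  also have "\<dots> = (\<Sum>c\<in>UNIV - {0::'a}. 1)"
  proof -
    have z: "(0::'a) ^ (q ^ m - 1) = 0" using e[of 0] by simp
    have "(\<Sum>c\<in>UNIV - {0::'a}. c ^ (q ^ m - 1)) = (\<Sum>c\<in>UNIV - {0::'a}. (1::'a))"
      by (rule sum.cong) (use e in auto)
    thus ?thesis using z by simp
  qed
  also have "\<dots> = of_nat (q - 1)" by (simp add: card_Diff_singleton q_def)
  also have "\<dots> = of_nat q - 1" using q2 by (simp add: of_nat_diff)
  also have "\<dots> = -1" using of_nat_card_zero q_def by simp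
  finally show ?thesis unfolding q_def .
qed

lemma pow_pred_inv: fixes x :: "'b::field"
  assumes "x \<noteq> 0" "0 < n" shows "x ^ (n - 1) = x ^ n * inverse x"
  using assms by (cases n) (simp_all add: field_simps)

lemma frob_tele: fixes t :: "'a::{finite,field} fls"
  shows "t ^ (card (UNIV::'a set) ^ k) - t = (\<Sum>j<k. (t ^ card (UNIV::'a set) - t) ^ (card (UNIV::'a set) ^ j))"
proof (induction k)
  case 0 thus ?case by simp
next
  case (Suc k)
  have "(t ^ card (UNIV::'a set) - t) ^ (card (UNIV::'a set) ^ k) = t ^ (card (UNIV::'a set) ^ Suc k) - t ^ (card (UNIV::'a set) ^ k)"
    by (simp add: frobn_diff power_mult[symmetric])
  thus ?case by (simp add: Suc.IH[symmetric] algebra_simps)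
qed

lemma sum_pow_lin: fixes t :: "'a::{finite,field} fls"
  shows "(\<Sum>c\<in>UNIV. (t + fls_const c) ^ (card (UNIV::'a set) ^ k - 1))
        = - (\<Sum>j<k. (t ^ card (UNIV::'a set) - t) ^ (card (UNIV::'a set) ^ j - 1))"
proof (cases "t ^ card (UNIV::'a set) = t")
  case True
  then obtain e where te: "t = fls_const e" using fixed_in_F by blast
  have "(\<Sum>c\<in>UNIV. (t + fls_const c) ^ (card (UNIV::'a set) ^ k - 1))
      = fls_const (\<Sum>c\<in>UNIV. (e + c) ^ (card (UNIV::'a set) ^ k - 1))"
    by (simp add: te fls_const_sum fls_plus_const fls_const_power)
  also have "(\<Sum>c\<in>UNIV. (e + c) ^ (card (UNIV::'a set) ^ k - 1)) = (\<Sum>c\<in>UNIV. c ^ (card (UNIV::'a set) ^ k - 1))"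
    by (rule sum.reindex_bij_betw) (auto intro!: bij_betwI[where g="\<lambda>x. x - e"])
  finally have L: "(\<Sum>c\<in>UNIV. (t + fls_const c) ^ (card (UNIV::'a set) ^ k - 1))
      = fls_const (\<Sum>c\<in>UNIV. c ^ (card (UNIV::'a set) ^ k - 1))" .
  show ?thesis
  proof (cases k)
    case 0 thus ?thesis using L of_nat_card_zero[where 'a='a] by simp
  next
    case (Suc k')
    have R: "(\<Sum>j<k. (0::'a fls) ^ (card (UNIV::'a set) ^ j - 1)) = 1"
    proof -
      have "(\<Sum>j<k. (0::'a fls) ^ (card (UNIV::'a set) ^ j - 1)) = (\<Sum>j\<in>{0}. (0::'a fls) ^ (card (UNIV::'a set) ^ j - 1))"
      proof (rule sum.mono_neutral_cong_right)
        show "\<forall>i\<in>{..<k} - {0}. (0::'a fls) ^ (card (UNIV::'a set) ^ i - 1) = 0"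
        proof
          fix i assume "i \<in> {..<k} - {0}"
          hence "i > 0" by auto
          hence "card (UNIV::'a set) ^ i \<ge> 2" using card_ge2[where 'a='a]
            by (metis le_trans self_le_power not_gr0 numeral_le_one_iff semiring_norm(69) one_le_numeral)
          thus "(0::'a fls) ^ (card (UNIV::'a set) ^ i - 1) = 0" by simp
        qed
      qed (use Suc in auto)
      thus ?thesis by simp
    qed
    show ?thesis using L sum_pow_F[of k, where 'a='a] Suc True R by simp
  qed
next
  case False
  define q where "q = card (UNIV::'a set)"
  have q2: "q \<ge> 2" unfolding q_def by (rule card_ge2)
  define s where "s = t ^ q - t"
  have s0: "s \<noteq> 0" using False unfolding s_def q_def by simp
  have tc: "t + fls_const c \<noteq> 0" for c using prod_lin_nonzero False by blast
  have qk: "q ^ k > 0" using q2 by simp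
  have "(t + fls_const c) ^ (q ^ k - 1) = 1 + (t ^ (q ^ k) - t) * inverse (t + fls_const c)" for c
  proof -
    have "(t + fls_const c) ^ (q ^ k - 1) = (t + fls_const c) ^ (q ^ k) * inverse (t + fls_const c)"
      by (rule pow_pred_inv[OF tc qk])
    also have "(t + fls_const c) ^ (q ^ k) = (t + fls_const c) + (t ^ (q ^ k) - t)"
      unfolding q_def by (simp add: frobn_add frobn_const)
    also have "\<dots> * inverse (t + fls_const c) = 1 + (t ^ (q ^ k) - t) * inverse (t + fls_const c)"
      using tc[of c] by (subst distrib_right) simp
    finally show ?thesis .
  qed
  hence "(\<Sum>c\<in>UNIV. (t + fls_const c) ^ (q ^ k - 1)) = of_nat q + (t ^ (q ^ k) - t) * (\<Sum>c\<in>UNIV. inverse (t + fls_const c))"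
    by (simp add: sum.distrib sum_distrib_left q_def)
  also have "\<dots> = (t ^ (q ^ k) - t) * (- inverse s)"
    using sum_inv_lin[OF False] of_nat_card_zero_fls unfolding q_def s_def by simp
  also have "\<dots> = - (\<Sum>j<k. s ^ (q ^ j) * inverse s)"
    unfolding frob_tele[of t k, folded q_def s_def] by (simp add: sum_distrib_right s_def)
  also have "\<dots> = - (\<Sum>j<k. s ^ (q ^ j - 1))"
    using pow_pred_inv[OF s0] q2 by simp
  finally show ?thesis unfolding q_def s_def .
qed


fun bet :: "nat \<Rightarrow> nat \<Rightarrow> 'a::{finite,field} fls" where
  "bet 0 = (\<lambda>j. if j = 0 then 1 else 0)"
| "bet (Suc i) = (\<lambda>j. (if j = 0 then 0 else bet i (j - 1) ^ card (UNIV::'a set))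
      - (\<Sum>k\<le>i. bet i k * (theta ^ i) ^ (card (UNIV::'a set) ^ k)) ^ (card (UNIV::'a set) - 1) * bet i j)"

definition Ef :: "nat \<Rightarrow> 'a::{finite,field} fls \<Rightarrow> 'a fls" where
  "Ef i x = (\<Sum>j\<le>i. bet i j * x ^ (card (UNIV::'a set) ^ j))"

definition Dc :: "nat \<Rightarrow> 'a::{finite,field} fls" where
  "Dc i = Ef i (theta ^ i)"

definition br :: "nat \<Rightarrow> 'a::{finite,field} fls" where
  "br n = theta ^ (card (UNIV::'a set) ^ n) - theta"

lemma bet_zero: "i < j \<Longrightarrow> bet i j = (0::'a::{finite,field} fls)"
proof (induction i arbitrary: j)
  case 0 thus ?case by simp
next
  case (Suc i) thus ?case using card_ge2[where 'a='a] by simp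
qed

lemma bet_Suc: "bet (Suc i) j = (if j = 0 then 0 else bet i (j - 1) ^ card (UNIV::'a set))
      - Dc i ^ (card (UNIV::'a set) - 1) * (bet i j :: 'a::{finite,field} fls)"
  by (simp add: Dc_def Ef_def)

declare bet.simps(2)[simp del]

lemma Ef_0 [simp]: "Ef 0 x = x"
  by (simp add: Ef_def)

lemma Dc_0 [simp]: "Dc 0 = 1"
  by (simp add: Dc_def)

lemma Ef_rec: "Ef (Suc i) x = Ef i x ^ card (UNIV::'a set) - Dc i ^ (card (UNIV::'a set) - 1) * Ef i (x::'a::{finite,field} fls)"
proof -
  define q where "q = card (UNIV::'a set)"
  have "Ef (Suc i) x = (\<Sum>j\<le>Suc i. (if j = 0 then 0 else bet i (j - 1) ^ q) * x ^ (q ^ j))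
      - Dc i ^ (q - 1) * (\<Sum>j\<le>Suc i. bet i j * x ^ (q ^ j))"
    unfolding Ef_def bet_Suc q_def[symmetric]
    by (simp add: left_diff_distrib sum_subtractf sum_distrib_left mult.assoc del: sum.atMost_Suc)
  also have "(\<Sum>j\<le>Suc i. bet i j * x ^ (q ^ j)) = Ef i x"
    unfolding Ef_def q_def by (simp add: bet_zero)
  also have "(\<Sum>j\<le>Suc i. (if j = 0 then 0 else bet i (j - 1) ^ q) * x ^ (q ^ j))
      = (\<Sum>j\<le>i. bet i j ^ q * x ^ (q ^ Suc j))"
    by (subst sum.atMost_Suc_shift) simp
  also have "\<dots> = Ef i x ^ q"
    unfolding Ef_def q_def frob_sum
  proof (rule sum.cong)
    fix j show "bet i j ^ card (UNIV::'a set) * x ^ (card (UNIV::'a set) ^ Suc j) = (bet i j * x ^ (card (UNIV::'a set) ^ j)) ^ card (UNIV::'a set)"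
      by (simp add: power_mult_distrib power_mult[symmetric] mult.commute)
  qed simp
  finally show ?thesis unfolding q_def .
qed

lemma Ef_add: "Ef i (x + y) = Ef i x + Ef i (y::'a::{finite,field} fls)"
  unfolding Ef_def by (simp add: frobn_add distrib_left sum.distrib)

lemma Ef_cmult: "Ef i (fls_const c * x) = fls_const c * Ef i (x::'a::{finite,field} fls)"
  unfolding Ef_def by (simp add: frobn_cmult sum_distrib_left mult.left_commute)

lemma Ef_zero [simp]: "Ef i 0 = (0::'a::{finite,field} fls)"
proof -
  have "card (UNIV::'a set) > 0" using card_ge2[where 'a='a] by simp
  thus ?thesis unfolding Ef_def by (simp add: power_0_left)
qed

lemma Ef_sum: "Ef i (\<Sum>k\<in>A. f k) = (\<Sum>k\<in>A. Ef i (f k :: 'a::{finite,field} fls))"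
  by (induction A rule: infinite_finite_induct) (simp_all add: Ef_add)

lemma Ef_vanish: "j < i \<Longrightarrow> Ef i (theta ^ j) = (0::'a::{finite,field} fls)"
proof (induction i)
  case 0 thus ?case by simp
next
  case (Suc i)
  show ?case
  proof (cases "j < i")
    case True thus ?thesis using Suc card_ge2[where 'a='a] by (simp add: Ef_rec)
  next
    case False
    hence "j = i" using Suc by simp
    have "Dc i ^ (card (UNIV::'a set) - 1) * Dc i = (Dc i :: 'a fls) ^ card (UNIV::'a set)"
      using card_ge2[where 'a='a] by (metis Suc_diff_1 not_numeral_le_zero not_gr0 power_Suc mult.commute le_0_eq)
    thus ?thesis using \<open>j = i\<close> by (simp add: Ef_rec Dc_def[symmetric])
  qed
qed

lemma H_alg0: fixes WW Zq W P B1 thq th u :: "'b::comm_ring_1"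
  shows "(thq*(WW - Zq*W) + (P*B1)*WW) - P*Zq*(th*u + B1*W) = th*((WW - Zq*W) - P*Zq*u) + (P*B1 + thq - th)*(WW - Zq*W)"
  by (simp add: algebra_simps)

lemma H_alg: fixes U WW Zq W P B1 Q1 T thq th B2 u :: "'b::comm_ring_1"
  assumes "U = WW - Zq*W" "P*B1 = Q1" "Q1 = T - thq" "B2 = T - th"
  shows "(thq*U + Q1*WW) - P*Zq*(th*u + B1*W) = th*(U - P*Zq*u) + B2*U"
proof -
  have "T = P*B1 + thq" using assms(2,3) by simp
  thus ?thesis using H_alg0[of thq WW Zq W P B1 th u] assms by simp
qed

lemma pow_qm1_mult: fixes x :: "'b::comm_monoid_mult" assumes "n > 0" shows "x ^ (n - 1) * x = x ^ n"
  using assms by (metis Suc_diff_1 power_Suc mult.commute)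

lemma D_from_H:
  assumes "\<forall>x::'a::{finite,field} fls. Ef (Suc i) (theta * x) = theta * Ef (Suc i) x + br (Suc i) * Ef i x ^ card (UNIV::'a set)"
  shows "Dc (Suc i) = br (Suc i) * (Dc i :: 'a fls) ^ card (UNIV::'a set)"
proof -
  have "Dc (Suc i) = Ef (Suc i) (theta * theta ^ i :: 'a fls)" by (simp add: Dc_def)
  also have "\<dots> = br (Suc i) * Dc i ^ card (UNIV::'a set)"
  proof -
    have a: "Ef (Suc i) (theta * theta ^ i :: 'a fls) = theta * Ef (Suc i) (theta ^ i) + br (Suc i) * Ef i (theta ^ i) ^ card (UNIV::'a set)"
      using assms by blast
    have b: "Ef (Suc i) (theta ^ i) = (0::'a fls)" using Ef_vanish[of i "Suc i"] by simp
    show ?thesis unfolding a b Dc_def by simp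
  qed
  finally show ?thesis .
qed

lemma H_Dc:
  "(\<forall>x::'a::{finite,field} fls. Ef (Suc i) (theta * x) = theta * Ef (Suc i) x + br (Suc i) * Ef i x ^ card (UNIV::'a set))
   \<and> Dc (Suc i) = br (Suc i) * (Dc i :: 'a fls) ^ card (UNIV::'a set)"
proof (induction i)
  case 0
  have "\<forall>x::'a fls. Ef (Suc 0) (theta * x) = theta * Ef (Suc 0) x + br (Suc 0) * Ef 0 x ^ card (UNIV::'a set)"
    by (simp add: Ef_rec br_def power_mult_distrib algebra_simps)
  thus ?case using D_from_H by blast
next
  case (Suc i)
  define q where "q = card (UNIV::'a set)"
  have q2: "q \<ge> 2" unfolding q_def by (rule card_ge2)
  have IH: "Ef (Suc i) (theta * x) = theta * Ef (Suc i) x + br (Suc i) * Ef i x ^ q" for x :: "'a fls"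
    using Suc q_def by blast
  have D1: "Dc (Suc i) = br (Suc i) * (Dc i :: 'a fls) ^ q" using Suc q_def by blast
  have H: "Ef (Suc (Suc i)) (theta * x) = theta * Ef (Suc (Suc i)) x + br (Suc (Suc i)) * Ef (Suc i) x ^ q" for x :: "'a fls"
  proof -
    define u where "u = Ef (Suc i) x"
    define w where "w = Ef i x"
    define B1 where "B1 = (br (Suc i) :: 'a fls)"
    define D0 where "D0 = (Dc i :: 'a fls)"
    define P where "P = B1 ^ (q - 1)"
    define Zq where "Zq = (D0 ^ (q - 1)) ^ q"
    have e1: "Ef (Suc (Suc i)) (theta * x) = Ef (Suc i) (theta * x) ^ q - Dc (Suc i) ^ (q - 1) * Ef (Suc i) (theta * x)"
      unfolding q_def by (rule Ef_rec)
    have e2: "Ef (Suc i) (theta * x) = theta * u + B1 * w ^ q" unfolding u_def w_def B1_def by (rule IH)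
    have e3: "(theta * u + B1 * w ^ q) ^ q = theta ^ q * u ^ q + B1 ^ q * (w ^ q) ^ q"
      unfolding q_def by (simp add: frob_add power_mult_distrib)
    have e4: "Dc (Suc i) ^ (q - 1) = P * Zq"
      unfolding D1 P_def Zq_def B1_def D0_def by (simp add: power_mult_distrib power_mult[symmetric] mult.commute)
    have e5: "Ef (Suc (Suc i)) x = u ^ q - Dc (Suc i) ^ (q - 1) * u" unfolding u_def q_def by (rule Ef_rec)
    have e6: "u ^ q = (w ^ q) ^ q - Zq * w ^ q"
    proof -
      have "u = w ^ q - D0 ^ (q - 1) * w" unfolding u_def w_def D0_def q_def by (rule Ef_rec)
      thus ?thesis unfolding Zq_def q_def by (simp add: frob_diff power_mult_distrib)
    qed
    have e7: "P * B1 = B1 ^ q" unfolding P_def by (rule pow_qm1_mult) (use q2 in simp)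
    have e8: "B1 ^ q = theta ^ (q ^ Suc (Suc i)) - theta ^ q"
      unfolding B1_def br_def q_def by (simp add: frob_diff power_mult[symmetric] mult.commute)
    have e9: "(br (Suc (Suc i)) :: 'a fls) = theta ^ (q ^ Suc (Suc i)) - theta" unfolding br_def q_def ..
    show ?thesis
      unfolding e1 e2 e3 e4 e5 u_def[symmetric]
      by (rule H_alg[OF e6 e7 e8 e9])
  qed
  thus ?case unfolding q_def using D_from_H by blast
qed

lemma H_id: "Ef (Suc i) (theta * x) = theta * Ef (Suc i) x + br (Suc i) * Ef i (x :: 'a::{finite,field} fls) ^ card (UNIV::'a set)"
  using H_Dc by blast

lemma Dc_Suc: "Dc (Suc i) = br (Suc i) * (Dc i :: 'a::{finite,field} fls) ^ card (UNIV::'a set)"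
  using H_Dc by blast

lemma theta_pow_nth: "fls_nth (theta ^ n :: 'a::{finite,field} fls) k = (if k = - int n then 1 else 0)"
  by (simp add: theta_def)

lemma br_nonzero: "n > 0 \<Longrightarrow> br n \<noteq> (0::'a::{finite,field} fls)"
proof
  assume n: "n > 0" and b: "br n = (0::'a fls)"
  have "card (UNIV::'a set) ^ n \<ge> 2" using card_ge2[where 'a='a] n
    by (metis le_trans self_le_power not_gr0 numeral_le_one_iff semiring_norm(69) one_le_numeral)
  hence h2: "int (card (UNIV::'a set)) ^ n \<ge> 2" by (metis of_nat_le_iff of_nat_numeral of_nat_power)
  hence "fls_nth (br n :: 'a fls) (- int (card (UNIV::'a set) ^ n)) = 1"
    unfolding br_def by (simp add: theta_pow_nth[where n=1, simplified] theta_def)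
  thus False using b by simp
qed

lemma Dc_nonzero: "Dc i \<noteq> (0::'a::{finite,field} fls)"
  by (induction i) (simp_all add: Dc_Suc br_nonzero)


definition Vp :: "nat \<Rightarrow> 'a::{finite,field} poly set" where
  "Vp d = {p. \<forall>i\<ge>d. coeff p i = 0}"

lemma A_lin:
  assumes "\<forall>i\<ge>N. coeff p i = 0"
  shows "A_to_Kinf p = (\<Sum>i<N. fls_const (coeff p i) * theta ^ i)"
proof -
  have "A_to_Kinf p = (\<Sum>i<max N (Suc (degree p)). fls_const (coeff p i) * theta ^ i)"
    unfolding A_to_Kinf_def
    by (rule sum.mono_neutral_cong_left) (auto simp: coeff_eq_0)
  also have "\<dots> = (\<Sum>i<N. fls_const (coeff p i) * theta ^ i)"
    by (rule sum.mono_neutral_cong_right) (use assms in auto)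
  finally show ?thesis .
qed

lemma A_lin': assumes "degree p < N" shows "A_to_Kinf p = (\<Sum>i<N. fls_const (coeff p i) * theta ^ i)"
  using assms by (intro A_lin) (auto simp: coeff_eq_0)

lemma A_add: "A_to_Kinf (p + r) = A_to_Kinf p + A_to_Kinf (r :: 'a::field poly)"
proof -
  define N where "N = Suc (max (degree p) (degree r))"
  have "degree (p + r) < N" unfolding N_def using degree_add_le_max[of p r] by simp
  hence a3: "A_to_Kinf (p + r) = (\<Sum>i<N. fls_const (coeff (p + r) i) * theta ^ i)" by (rule A_lin')
  have a1: "A_to_Kinf p = (\<Sum>i<N. fls_const (coeff p i) * theta ^ i)" by (rule A_lin') (simp add: N_def)
  have a2: "A_to_Kinf r = (\<Sum>i<N. fls_const (coeff r i) * theta ^ i)" by (rule A_lin') (simp add: N_def)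
  show ?thesis unfolding a1 a2 a3
    by (simp add: sum.distrib fls_plus_const[symmetric] distrib_right)
qed

lemma A_monom: "A_to_Kinf (monom c d) = fls_const c * (theta ^ d :: 'a::field fls)"
proof -
  have "A_to_Kinf (monom c d) = (\<Sum>i<Suc d. fls_const (coeff (monom c d) i) * (theta ^ i :: 'a fls))"
    by (rule A_lin) (simp add: coeff_monom)
  also have "\<dots> = fls_const c * theta ^ d"
    by (subst sum.lessThan_Suc) (simp add: coeff_monom)
  finally show ?thesis .
qed

lemma A_zero [simp]: "A_to_Kinf 0 = (0::'a::field fls)"
  by (simp add: A_to_Kinf_def)

lemma Vp_0: "Vp 0 = {0}"
  by (auto simp: Vp_def poly_eq_iff)

lemma Vp_Suc_bij: "bij_betw (\<lambda>(c, v). v + monom c d) (UNIV \<times> (Vp d :: 'a::{finite,field} poly set)) (Vp (Suc d))"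
proof (rule bij_betwI[where g="\<lambda>p. (coeff p d, p - monom (coeff p d) d)"])
  show "(\<lambda>(c, v). v + monom c d) \<in> UNIV \<times> Vp d \<rightarrow> Vp (Suc d)"
    by (auto simp: Vp_def coeff_monom)
  show "(\<lambda>p. (coeff p d, p - monom (coeff p d) d)) \<in> Vp (Suc d) \<rightarrow> UNIV \<times> Vp d"
    by (auto simp: Vp_def coeff_monom)
  show "(\<lambda>p. (coeff p d, p - monom (coeff p d) d)) ((\<lambda>(c, v). v + monom c d) x) = x" if "x \<in> UNIV \<times> Vp d" for x
    using that by (auto simp: Vp_def coeff_monom)
  show "(\<lambda>(c, v). v + monom c d) (coeff y d, y - monom (coeff y d) d) = y" for y :: "'a poly"
    by (simp add: diff_add_cancel)
qed

lemma finite_Vp: "finite (Vp d :: 'a::{finite,field} poly set)"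
proof (induction d)
  case 0 thus ?case by (simp add: Vp_0)
next
  case (Suc d)
  have "Vp (Suc d) = (\<lambda>(c, v). v + monom c d) ` (UNIV \<times> (Vp d :: 'a poly set))"
    using bij_betw_imp_surj_on[OF Vp_Suc_bij[of d]] by (simp add: eq_commute)
  thus ?case using Suc by simp
qed

lemma sum_Vp_Suc:
  "(\<Sum>p\<in>Vp (Suc d). f p) = (\<Sum>c\<in>(UNIV::'a::{finite,field} set). \<Sum>v\<in>Vp d. f (v + monom c d))"
proof -
  have "(\<Sum>p\<in>Vp (Suc d). f p) = (\<Sum>x\<in>UNIV \<times> Vp d. f ((\<lambda>(c, v). v + monom c d) x))"
    by (rule sum.reindex_bij_betw[OF Vp_Suc_bij, symmetric])
  also have "\<dots> = (\<Sum>c\<in>UNIV. \<Sum>v\<in>Vp d. f (v + monom c d))"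
    by (simp add: sum.cartesian_product split_def)
  finally show ?thesis .
qed

lemma monic_deg_eq: "monic_deg d = (\<lambda>v. monom 1 d + v) ` (Vp d :: 'a::{finite,field} poly set)"
proof (intro equalityI subsetI)
  fix p :: "'a poly" assume p: "p \<in> monic_deg d"
  hence dp: "degree p = d" "lead_coeff p = 1" by (auto simp: monic_deg_def)
  have "p - monom 1 d \<in> Vp d"
    unfolding Vp_def using dp by (auto simp: coeff_monom coeff_eq_0 le_neq_implies_less)
  moreover have "p = monom 1 d + (p - monom 1 d)" by simp
  ultimately show "p \<in> (\<lambda>v. monom 1 d + v) ` Vp d" by blast
next
  fix p :: "'a poly" assume "p \<in> (\<lambda>v. monom 1 d + v) ` Vp d"
  then obtain v where v: "v \<in> Vp d" "p = monom 1 d + v" by blast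
  have c: "coeff p d = 1" "\<forall>i>d. coeff p i = 0" using v by (auto simp: Vp_def coeff_monom)
  hence "degree p = d"
    by (metis degree_le le_antisym le_degree one_neq_zero leI)
  thus "p \<in> monic_deg d" using c by (simp add: monic_deg_def)
qed

lemma sum_monic:
  "(\<Sum>a\<in>monic_deg d. g (A_to_Kinf a)) = (\<Sum>v\<in>(Vp d :: 'a::{finite,field} poly set). g (theta ^ d + A_to_Kinf v))"
proof -
  have "inj_on (\<lambda>v. monom 1 d + v) (Vp d :: 'a poly set)" by (auto simp: inj_on_def)
  thus ?thesis unfolding monic_deg_eq by (simp add: sum.reindex A_add A_monom)
qed

definition Ws :: "nat \<Rightarrow> ('a::{finite,field} fls \<Rightarrow> 'a fls) \<Rightarrow> 'a fls \<Rightarrow> 'a fls" where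
  "Ws d g x = (\<Sum>v\<in>Vp d. g (x + A_to_Kinf v))"

lemma Ws_0: "Ws 0 g x = g x"
  by (simp add: Ws_def Vp_0)

lemma Ws_Suc: "Ws (Suc d) g x = (\<Sum>c\<in>UNIV. Ws d g (x + fls_const c * theta ^ d))"
  unfolding Ws_def sum_Vp_Suc by (simp add: A_add A_monom add_ac)

lemma pow_sum_Ws: "pow_sum n d = Ws d (\<lambda>y. inverse y ^ n) (theta ^ d)"
  unfolding pow_sum_def Ws_def by (rule sum_monic)

lemma Ef_Vp: "v \<in> Vp d \<Longrightarrow> Ef d (A_to_Kinf v) = (0::'a::{finite,field} fls)"
  unfolding Vp_def by (simp add: A_lin[of d] Ef_sum Ef_cmult Ef_vanish)


lemma pow_div_pow: fixes x :: "'b::field"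
  assumes "x \<noteq> 0" "0 < n" shows "x ^ (n - 1) * inverse (x ^ n) = inverse x"
proof -
  obtain m where n: "n = Suc m" using assms(2) by (cases n) auto
  show ?thesis using assms(1) by (simp add: n inverse_mult_distrib)
qed

lemma pow_mul_inv: fixes x :: "'b::field"
  assumes "x \<noteq> 0" "0 < n" shows "x ^ n * inverse x = x ^ (n - 1)"
proof -
  obtain m where n: "n = Suc m" using assms(2) by (cases n) auto
  show ?thesis using assms(1) by (simp add: n)
qed

lemma Ef_shift: "Ef d (x + fls_const c * theta ^ d) = Ef d x + fls_const c * (Dc d :: 'a::{finite,field} fls)"
  by (simp add: Ef_add Ef_cmult Dc_def)

lemma Ef_Suc_factor: fixes x :: "'a::{finite,field} fls"
  shows "Ef (Suc d) x = Dc d ^ card (UNIV::'a set) * ((Ef d x * inverse (Dc d)) ^ card (UNIV::'a set) - Ef d x * inverse (Dc d))"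
proof -
  define q where "q = card (UNIV::'a set)"
  have q2: "q \<ge> 2" unfolding q_def by (rule card_ge2)
  have D: "Dc d \<noteq> (0::'a fls)" by (rule Dc_nonzero)
  have "Dc d ^ q * ((Ef d x * inverse (Dc d)) ^ q - Ef d x * inverse (Dc d))
      = Ef d x ^ q - Dc d ^ q * inverse (Dc d) * Ef d x"
    using D by (simp add: power_mult_distrib power_inverse field_simps)
  also have "Dc d ^ q * inverse (Dc d) = (Dc d :: 'a fls) ^ (q - 1)"
    using pow_mul_inv[OF D, of q] q2 by simp
  finally show ?thesis using Ef_rec[of d x] unfolding q_def by simp
qed

lemma S_lemma_gen:
  fixes k :: nat and x :: "'a::{finite,field} fls"
  assumes key: "\<And>t::'a fls. t ^ card (UNIV::'a set) \<noteq> t \<Longrightarrow>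
     (\<Sum>c\<in>UNIV. inverse (t + fls_const c) ^ k) = (- inverse (t ^ card (UNIV::'a set) - t)) ^ k"
  shows "Ef d x \<noteq> 0 \<Longrightarrow> Ws d (\<lambda>y. inverse y ^ k) x = (bet d 0 * inverse (Ef d x)) ^ k"
proof (induction d arbitrary: x)
  case 0 thus ?case by (simp add: Ws_0)
next
  case (Suc d)
  define q where "q = card (UNIV::'a set)"
  define D where "D = (Dc d :: 'a fls)"
  have D0: "D \<noteq> 0" unfolding D_def by (rule Dc_nonzero)
  define t where "t = Ef d x * inverse D"
  have E: "Ef (Suc d) x = D ^ q * (t ^ q - t)" unfolding D_def t_def q_def by (rule Ef_Suc_factor)
  hence tq: "t ^ q \<noteq> t" using Suc.prems by auto
  have tc: "t + fls_const c \<noteq> 0" for c using prod_lin_nonzero tq q_def by blast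
  have sh: "Ef d (x + fls_const c * theta ^ d) = D * (t + fls_const c)" for c
    unfolding Ef_shift D_def[symmetric] t_def using D0 by (simp add: field_simps)
  have "Ws (Suc d) (\<lambda>y. inverse y ^ k) x = (\<Sum>c\<in>UNIV. (bet d 0 * inverse (D * (t + fls_const c))) ^ k)"
    unfolding Ws_Suc
  proof (rule sum.cong)
    fix c
    have "Ef d (x + fls_const c * theta ^ d) \<noteq> 0" using sh[of c] D0 tc[of c] by simp
    thus "Ws d (\<lambda>y. inverse y ^ k) (x + fls_const c * theta ^ d) = (bet d 0 * inverse (D * (t + fls_const c))) ^ k"
      using Suc.IH sh[of c] by simp
  qed simp
  also have "\<dots> = (bet d 0 * inverse D) ^ k * (\<Sum>c\<in>UNIV. inverse (t + fls_const c) ^ k)"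
    by (simp add: sum_distrib_left power_mult_distrib inverse_mult_distrib mult_ac)
  also have "\<dots> = (bet d 0 * inverse D) ^ k * (- inverse (t ^ q - t)) ^ k"
    using key[OF tq[unfolded q_def]] q_def by simp
  also have "\<dots> = (bet (Suc d) 0 * inverse (Ef (Suc d) x)) ^ k"
  proof -
    have "bet (Suc d) 0 = - (D ^ (q - 1) * bet d 0)" by (simp add: bet_Suc D_def q_def)
    moreover have "D ^ (q - 1) * inverse (D ^ q) = inverse D"
      using pow_div_pow[OF D0, of q] card_ge2[where 'a='a] q_def by simp
    ultimately have "bet (Suc d) 0 * inverse (Ef (Suc d) x) = bet d 0 * inverse D * (- inverse (t ^ q - t))"
      unfolding E by (simp add: inverse_mult_distrib mult_ac)
    thus ?thesis by (simp only: power_mult_distrib)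
  qed
  finally show ?case .
qed

lemma S_lemma1: "Ef d x \<noteq> 0 \<Longrightarrow> Ws d (\<lambda>y. inverse y ^ 1) x = (bet d 0 * inverse (Ef d (x::'a::{finite,field} fls))) ^ 1"
proof (rule S_lemma_gen)
  fix t :: "'a fls" assume "t ^ card (UNIV::'a set) \<noteq> t"
  thus "(\<Sum>c\<in>UNIV. inverse (t + fls_const c) ^ 1) = (- inverse (t ^ card (UNIV::'a set) - t)) ^ 1"
    using sum_inv_lin[of t] by simp
qed

lemma S_lemma_qm1: "Ef d x \<noteq> 0 \<Longrightarrow> Ws d (\<lambda>y. inverse y ^ (card (UNIV::'a set) - 1)) x
    = (bet d 0 * inverse (Ef d (x::'a::{finite,field} fls))) ^ (card (UNIV::'a set) - 1)"
proof (rule S_lemma_gen)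
  fix t :: "'a fls" assume "t ^ card (UNIV::'a set) \<noteq> t"
  thus "(\<Sum>c\<in>UNIV. inverse (t + fls_const c) ^ (card (UNIV::'a set) - 1)) =
         (- inverse (t ^ card (UNIV::'a set) - t)) ^ (card (UNIV::'a set) - 1)"
    using sum_inv_lin_qm1[of t] minus_one_pow_qm1[where 'a='a]
    by (simp add: power_minus[of "inverse _"])
qed

definition sig :: "nat \<Rightarrow> 'a::{finite,field} fls" where
  "sig d = bet d 0 * inverse (Dc d)"

lemma pow_sum_1: "pow_sum 1 d = (sig d :: 'a::{finite,field} fls)"
proof -
  have "Ef d (theta ^ d :: 'a fls) = (Dc d :: 'a fls)" by (simp add: Dc_def)
  thus ?thesis unfolding pow_sum_Ws sig_def using S_lemma1[of d "theta ^ d :: 'a fls"] Dc_nonzero[of d] by simp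
qed

lemma pow_sum_qm1: "pow_sum (card (UNIV::'a set) - 1) d = (sig d :: 'a::{finite,field} fls) ^ (card (UNIV::'a set) - 1)"
proof -
  have "Ef d (theta ^ d :: 'a fls) = (Dc d :: 'a fls)" by (simp add: Dc_def)
  thus ?thesis unfolding pow_sum_Ws sig_def using S_lemma_qm1[of d "theta ^ d :: 'a fls"] Dc_nonzero[of d] by simp
qed

lemma pow_sum_q: "pow_sum (card (UNIV::'a set)) d = (sig d :: 'a::{finite,field} fls) ^ card (UNIV::'a set)"
proof -
  have "pow_sum (card (UNIV::'a set)) d = (pow_sum 1 d :: 'a fls) ^ card (UNIV::'a set)"
    unfolding pow_sum_def by (simp add: frob_sum)
  thus ?thesis using pow_sum_1[of d, where 'a='a] by simp
qed

lemma sig_0: "sig 0 = 1"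
  by (simp add: sig_def)

lemma sig_Suc: "sig (Suc d) = - (sig d * inverse (br (Suc d) :: 'a::{finite,field} fls))"
proof -
  define q where "q = card (UNIV::'a set)"
  define D where "D = (Dc d :: 'a fls)"
  have D0: "D \<noteq> 0" unfolding D_def by (rule Dc_nonzero)
  have "D ^ (q - 1) * inverse (D ^ q) = inverse D"
    using pow_div_pow[OF D0, of q] card_ge2[where 'a='a] q_def by simp
  thus ?thesis
    unfolding sig_def by (simp add: bet_Suc Dc_Suc D_def[symmetric] q_def[symmetric] inverse_mult_distrib mult_ac)
qed


fun spsum :: "('a::{finite,field} fls \<Rightarrow> 'a fls) \<Rightarrow> 'a fls list \<Rightarrow> 'a fls \<Rightarrow> 'a fls" where
  "spsum g [] x = g x"
| "spsum g (w # ws) x = (\<Sum>c\<in>UNIV. spsum g ws (x + fls_const c * w))"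

fun wsd :: "nat \<Rightarrow> 'a::{finite,field} fls list" where
  "wsd 0 = []"
| "wsd (Suc d) = theta ^ d # wsd d"

lemma length_wsd [simp]: "length (wsd d) = d"
  by (induction d) auto

lemma Ws_spsum: "Ws d g x = spsum g (wsd d) x"
  by (induction d arbitrary: x) (simp_all add: Ws_0 Ws_Suc)

lemma spsum_swap: "spsum g (w # ws) x = spsum (\<lambda>y. \<Sum>c\<in>UNIV. g (y + fls_const c * w)) ws x"
proof (induction ws arbitrary: x)
  case Nil thus ?case by simp
next
  case (Cons u us)
  have "spsum g (w # u # us) x = (\<Sum>c\<in>UNIV. \<Sum>e\<in>UNIV. spsum g us (x + fls_const c * w + fls_const e * u))"
    by simp
  also have "\<dots> = (\<Sum>e\<in>UNIV. \<Sum>c\<in>UNIV. spsum g us (x + fls_const e * u + fls_const c * w))"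
    by (subst sum.swap) (simp add: add_ac)
  also have "\<dots> = (\<Sum>e\<in>UNIV. spsum g (w # us) (x + fls_const e * u))" by simp
  also have "\<dots> = spsum (\<lambda>y. \<Sum>c\<in>UNIV. g (y + fls_const c * w)) (u # us) x"
    using Cons.IH by simp
  finally show ?case .
qed

lemma spsum_cmult: "spsum (\<lambda>y. a * g y) ws x = a * spsum g ws x"
  by (induction ws arbitrary: x) (simp_all add: sum_distrib_left)

lemma spsum_sum: "spsum (\<lambda>y. \<Sum>j\<in>J. g j y) ws x = (\<Sum>j\<in>J. spsum (g j) ws x)"
proof (induction ws arbitrary: x)
  case Nil thus ?case by simp
next
  case (Cons w ws) thus ?case by (simp add: sum.swap[of _ J])
qed

lemma spsum_uminus: "spsum (\<lambda>y. - g y) ws x = - spsum g ws x"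
  by (induction ws arbitrary: x) (simp_all add: sum_negf)

lemma spsum_zero: "spsum (\<lambda>y. 0) ws x = 0"
  by (induction ws arbitrary: x) simp_all

lemma spsum_map:
  assumes add: "\<And>a b. M (a + b) = M a + M b" and cm: "\<And>c a. M (fls_const c * a) = fls_const c * M a"
  shows "spsum (\<lambda>y. g (M y)) ws x = spsum g (map M ws) (M x)"
  by (induction ws arbitrary: x) (simp_all add: add cm)

lemma spsum_cong: "(\<And>y. f y = g y) \<Longrightarrow> spsum f ws x = spsum g ws x"
proof -
  assume "\<And>y. f y = g y" hence "f = g" by auto
  thus ?thesis by simp
qed

lemma spsum_vanish_aux:
  "length ws0 = n \<Longrightarrow> k < n \<Longrightarrow> spsum (\<lambda>y. y ^ (card (UNIV::'a set) ^ k - 1)) ws0 (x :: 'a::{finite,field} fls) = 0"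
proof (induction n arbitrary: ws0 x k)
  case 0 thus ?case by simp
next
  case (Suc n)
  then obtain w ws where wws: "ws0 = w # ws" "length ws = n" by (cases ws0) auto
  note Cons_prems = Suc.prems
  have IH: "spsum (\<lambda>y. y ^ (card (UNIV::'a set) ^ k' - 1)) vs (z :: 'a fls) = 0" if "length vs = n" "k' < n" for vs z k'
    using Suc.IH that by blast
  define q where "q = card (UNIV::'a set)"
  define m where "m = q ^ k - 1"
  have main: "spsum (\<lambda>y. y ^ (q ^ k - 1)) (w # ws) x = 0"
  proof (cases "w = 0")
    case True
    have "spsum (\<lambda>y. y ^ (q ^ k - 1)) (w # ws) x = spsum (\<lambda>y. of_nat q * y ^ (q ^ k - 1)) ws x"
      unfolding spsum_swap using True by (simp add: q_def)
    also have "\<dots> = 0" unfolding q_def of_nat_card_zero_fls by (simp add: spsum_zero)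
    finally show ?thesis .
  next
    case False
    define M where "M y = (y * inverse w) ^ q - y * inverse w" for y
    have Madd: "M (a + b) = M a + M b" for a b
      unfolding M_def q_def by (simp add: distrib_right frob_add)
    have Mcm: "M (fls_const c * a) = fls_const c * M a" for c a
      unfolding M_def q_def by (simp add: mult.assoc frob_cmult right_diff_distrib)
    have inner: "(\<Sum>c\<in>UNIV. (y + fls_const c * w) ^ m) = w ^ m * (- (\<Sum>j<k. M y ^ (q ^ j - 1)))" for y
    proof -
      have "y + fls_const c * w = w * (y * inverse w + fls_const c)" for c
        using False by (simp add: field_simps)
      hence "(\<Sum>c\<in>UNIV. (y + fls_const c * w) ^ m) = w ^ m * (\<Sum>c\<in>UNIV. (y * inverse w + fls_const c) ^ m)"
        by (simp add: power_mult_distrib sum_distrib_left)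
      also have "(\<Sum>c\<in>UNIV. (y * inverse w + fls_const c) ^ m) = - (\<Sum>j<k. M y ^ (q ^ j - 1))"
        unfolding m_def q_def M_def by (rule sum_pow_lin)
      finally show ?thesis .
    qed
    have "spsum (\<lambda>y. y ^ m) (w # ws) x = spsum (\<lambda>y. w ^ m * (- (\<Sum>j<k. M y ^ (q ^ j - 1)))) ws x"
      unfolding spsum_swap by (rule spsum_cong) (rule inner)
    also have "\<dots> = w ^ m * (- (\<Sum>j<k. spsum (\<lambda>z. z ^ (q ^ j - 1)) (map M ws) (M x)))"
    proof -
      have mp: "spsum (\<lambda>y. M y ^ n) ws x = spsum (\<lambda>z. z ^ n) (map M ws) (M x)" for n
        using spsum_map[of M "\<lambda>z. z ^ n", OF Madd Mcm] by simp
      show ?thesis by (simp add: spsum_cmult spsum_uminus spsum_sum mp)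
    qed
    also have "\<dots> = 0"
    proof -
      have "spsum (\<lambda>z. z ^ (q ^ j - 1)) (map M ws) (M x) = 0" if "j < k" for j
        using IH[of "map M ws" j "M x"] that Cons_prems wws unfolding q_def by simp
      thus ?thesis by simp
    qed
    finally show ?thesis unfolding m_def .
  qed
  thus ?case unfolding wws(1) q_def .
qed

lemma spsum_vanish:
  "k < length ws \<Longrightarrow> spsum (\<lambda>y. y ^ (card (UNIV::'a set) ^ k - 1)) ws (x :: 'a::{finite,field} fls) = 0"
  using spsum_vanish_aux by blast

lemma Ws_vanish: "k < d \<Longrightarrow> Ws d (\<lambda>y. y ^ (card (UNIV::'a set) ^ k - 1)) (x :: 'a::{finite,field} fls) = 0"
  unfolding Ws_spsum by (rule spsum_vanish) simp


definition Ct :: "nat \<Rightarrow> 'a::{finite,field} skew" where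
  "Ct i = (skew_mult (card (UNIV::'a set)) carlitz_theta ^^ i) skew_one"

lemma skew_mult_ct: "skew_mult (card (UNIV::'a set)) carlitz_theta g k
   = (if k = 0 then theta * g 0 else theta * g k + g (k - 1) ^ card (UNIV::'a set))"
  for g :: "'a::{finite,field} skew"
proof (cases k)
  case 0 thus ?thesis by (simp add: skew_mult_def carlitz_theta_def)
next
  case (Suc k')
  have "skew_mult (card (UNIV::'a set)) carlitz_theta g k = (\<Sum>i\<in>{0, 1}. carlitz_theta i * g (k - i) ^ (card (UNIV::'a set) ^ i))"
    unfolding skew_mult_def
    by (rule sum.mono_neutral_cong_right) (auto simp: carlitz_theta_def Suc)
  thus ?thesis using Suc by (simp add: carlitz_theta_def)
qed

lemma Ct_Suc: "(Ct (Suc i) k :: 'a::{finite,field} fls) = (if k = 0 then theta * Ct i 0 else theta * Ct i k + Ct i (k - 1) ^ card (UNIV::'a set))"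
  unfolding Ct_def by (simp add: skew_mult_ct)

lemma Ct_0: "(Ct 0 :: 'a::{finite,field} skew) = skew_one"
  by (simp add: Ct_def)

lemma Ct_supp: "i < k \<Longrightarrow> (Ct i k :: 'a::{finite,field} fls) = 0"
proof (induction i arbitrary: k)
  case 0 thus ?case by (simp add: Ct_0 skew_one_def)
next
  case (Suc i)
  thus ?case using card_ge2[where 'a='a] by (simp add: Ct_Suc)
qed

definition uu :: "nat \<Rightarrow> 'a::{finite,field} fls" where
  "uu i = (\<Sum>k\<le>i. Ct i k)"

lemma uu_0: "(uu 0 :: 'a::{finite,field} fls) = 1"
  by (simp add: uu_def Ct_0 skew_one_def)

lemma uu_Suc: "uu (Suc i) = theta * uu i + (uu i :: 'a::{finite,field} fls) ^ card (UNIV::'a set)"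
proof -
  define q where "q = card (UNIV::'a set)"
  have "(uu (Suc i) :: 'a fls) = Ct (Suc i) 0 + (\<Sum>k\<le>i. Ct (Suc i) (Suc k))"
    unfolding uu_def by (rule sum.atMost_Suc_shift)
  also have "\<dots> = theta * Ct i 0 + (\<Sum>k\<le>i. theta * Ct i (Suc k) + Ct i k ^ q)"
    by (simp add: Ct_Suc q_def)
  also have "\<dots> = theta * (Ct i 0 + (\<Sum>k\<le>i. Ct i (Suc k))) + (\<Sum>k\<le>i. Ct i k ^ q)"
    by (simp add: sum.distrib sum_distrib_left distrib_left)
  also have "(Ct i 0 :: 'a fls) + (\<Sum>k\<le>i. Ct i (Suc k)) = (\<Sum>k\<le>Suc i. Ct i k)"
    by (rule sum.atMost_Suc_shift[symmetric])
  also have "\<dots> = uu i" unfolding uu_def by (simp add: Ct_supp)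
  also have "(\<Sum>k\<le>i. (Ct i k :: 'a fls) ^ q) = uu i ^ q" unfolding uu_def q_def by (simp add: frob_sum)
  finally show ?thesis unfolding q_def .
qed

definition psi :: "nat \<Rightarrow> 'a::{finite,field} fls \<Rightarrow> 'a fls" where
  "psi N x = (\<Sum>j\<le>N. Ef j x * inverse (Dc j))"

lemma psi_stable: "i \<le> N \<Longrightarrow> psi N (theta ^ i) = psi i (theta ^ i :: 'a::{finite,field} fls)"
  unfolding psi_def by (rule sum.mono_neutral_right) (auto simp: Ef_vanish)

lemma uu_psi: "uu i = psi i (theta ^ i :: 'a::{finite,field} fls)"
proof (induction i)
  case 0 thus ?case by (simp add: uu_0 psi_def)
next
  case (Suc i)
  define x where "x = (theta ^ i :: 'a fls)"
  define q where "q = card (UNIV::'a set)"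
  have step: "Ef (Suc j) (theta * x) * inverse (Dc (Suc j)) = theta * (Ef (Suc j) x * inverse (Dc (Suc j))) + (Ef j x * inverse (Dc j)) ^ q" for j
  proof -
    have b: "br (Suc j) \<noteq> (0::'a fls)" by (rule br_nonzero) simp
    have d: "Dc j \<noteq> (0::'a fls)" by (rule Dc_nonzero)
    show ?thesis unfolding H_id Dc_Suc q_def using b d
      by (simp add: field_simps power_mult_distrib power_inverse)
  qed
  have "psi (Suc i) (theta * x) = Ef 0 (theta * x) * inverse (Dc 0) + (\<Sum>j\<le>i. Ef (Suc j) (theta * x) * inverse (Dc (Suc j)))"
    unfolding psi_def by (rule sum.atMost_Suc_shift)
  also have "\<dots> = theta * (x + (\<Sum>j\<le>i. Ef (Suc j) x * inverse (Dc (Suc j)))) + (\<Sum>j\<le>i. Ef j x * inverse (Dc j)) ^ q"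
    unfolding step by (simp add: sum.distrib sum_distrib_left distrib_left frob_sum q_def)
  also have "x + (\<Sum>j\<le>i. Ef (Suc j) x * inverse (Dc (Suc j))) = psi (Suc i) x"
    unfolding psi_def by (subst sum.atMost_Suc_shift) simp
  also have "psi (Suc i) x = psi i x" unfolding x_def by (rule psi_stable) simp
  finally have "psi (Suc i) (theta * x) = theta * psi i x + psi i x ^ q"
    unfolding psi_def by simp
  thus ?case using Suc unfolding x_def q_def by (simp add: uu_Suc)
qed


lemma finite_monic: "finite (monic_deg d :: 'a::{finite,field} poly set)"
  unfolding monic_deg_eq using finite_Vp by blast

lemma monic_degree: "a \<in> monic_deg d \<Longrightarrow> degree a = d"
  by (simp add: monic_deg_def)

lemma carlitz_supp: "a \<in> monic_deg d \<Longrightarrow> d < k \<Longrightarrow> carlitz a k = (0::'a::{finite,field} fls)"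
  unfolding carlitz_def by (auto simp: monic_degree Ct_supp[unfolded Ct_def] intro!: sum.neutral)

lemma psi_add: "psi N (x + y) = psi N x + psi N (y :: 'a::{finite,field} fls)"
  unfolding psi_def by (simp add: Ef_add distrib_right sum.distrib)

lemma psi_cmult: "psi N (fls_const c * x) = fls_const c * psi N (x :: 'a::{finite,field} fls)"
  unfolding psi_def by (simp add: Ef_cmult sum_distrib_left mult.assoc)

lemma psi_sum: "psi N (\<Sum>k\<in>A. f k) = (\<Sum>k\<in>A. psi N (f k :: 'a::{finite,field} fls))"
proof (induction A rule: infinite_finite_induct)
  case (infinite A) thus ?case by (simp add: psi_def)
next
  case empty thus ?case by (simp add: psi_def)
next
  case (insert x F) thus ?case by (simp add: psi_add)
qed

lemma carlitz_sum: assumes "a \<in> monic_deg d"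
  shows "(\<Sum>k\<le>d. carlitz a k) = psi d (A_to_Kinf a :: 'a::{finite,field} fls)"
proof -
  have dg: "degree a = d" using assms by (rule monic_degree)
  have "(\<Sum>k\<le>d. carlitz a k) = (\<Sum>i\<le>d. fls_const (coeff a i) * (\<Sum>k\<le>d. (Ct i k :: 'a fls)))"
    unfolding carlitz_def Ct_def[symmetric] dg by (subst sum.swap) (simp add: sum_distrib_left)
  also have "\<dots> = (\<Sum>i\<le>d. fls_const (coeff a i) * uu i)"
  proof (rule sum.cong)
    fix i assume "i \<in> {..d}"
    hence "(\<Sum>k\<le>d. (Ct i k :: 'a fls)) = uu i"
      unfolding uu_def by (intro sum.mono_neutral_right) (auto simp: Ct_supp)
    thus "fls_const (coeff a i) * (\<Sum>k\<le>d. Ct i k) = fls_const (coeff a i) * uu i" by simp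
  qed simp
  also have "\<dots> = (\<Sum>i\<le>d. fls_const (coeff a i) * psi d (theta ^ i))"
  proof (rule sum.cong)
    fix i assume "i \<in> {..d}"
    hence "uu i = psi d (theta ^ i :: 'a fls)" using psi_stable[of i d, where 'a='a] uu_psi[of i, where 'a='a] by simp
    thus "fls_const (coeff a i) * uu i = fls_const (coeff a i) * psi d (theta ^ i)" by simp
  qed simp
  also have "\<dots> = psi d (A_to_Kinf a)"
  proof -
    have "A_to_Kinf a = (\<Sum>i<Suc d. fls_const (coeff a i) * theta ^ i)" by (rule A_lin') (simp add: dg)
    thus ?thesis by (simp add: psi_sum psi_cmult lessThan_Suc_atMost)
  qed
  finally show ?thesis .
qed

lemma T_eval:
  "skew_eval (skew_sum (\<lambda>a. skew_scal (inverse (A_to_Kinf a) ^ card (UNIV::'a set)) (carlitz a)) (monic_deg d))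
   = (\<Sum>a\<in>monic_deg d. inverse (A_to_Kinf a) ^ card (UNIV::'a set) * psi d (A_to_Kinf a :: 'a::{finite,field} fls))"
proof -
  define f where "f = skew_sum (\<lambda>a. skew_scal (inverse (A_to_Kinf a) ^ card (UNIV::'a set)) (carlitz a)) (monic_deg d :: 'a poly set)"
  have fk: "f k = (\<Sum>a\<in>monic_deg d. inverse (A_to_Kinf a) ^ card (UNIV::'a set) * carlitz a k)" for k
    unfolding f_def skew_sum_def skew_scal_def by simp
  have f0: "d < k \<Longrightarrow> f k = 0" for k unfolding fk by (auto intro!: sum.neutral simp: carlitz_supp)
  have "skew_eval f = (\<Sum>k\<le>d. f k)"
    unfolding skew_eval_def
    by (rule sum.mono_neutral_cong_left) (use f0 in \<open>auto simp: not_le[symmetric]\<close>)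
  also have "\<dots> = (\<Sum>a\<in>monic_deg d. inverse (A_to_Kinf a) ^ card (UNIV::'a set) * (\<Sum>k\<le>d. carlitz a k))"
    unfolding fk by (subst sum.swap) (simp add: sum_distrib_left)
  also have "\<dots> = (\<Sum>a\<in>monic_deg d. inverse (A_to_Kinf a) ^ card (UNIV::'a set) * psi d (A_to_Kinf a))"
    by (intro sum.cong refl) (simp add: carlitz_sum)
  finally show ?thesis unfolding f_def .
qed


lemma monic_Ws: "(\<Sum>a\<in>monic_deg d. g (A_to_Kinf a)) = Ws d g (theta ^ d :: 'a::{finite,field} fls)"
  unfolding Ws_def by (rule sum_monic)

lemma Ws_cong: "(\<And>v. v \<in> Vp d \<Longrightarrow> f (x + A_to_Kinf v) = g (x + A_to_Kinf v)) \<Longrightarrow> Ws d f x = Ws d g x"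
  unfolding Ws_def by (rule sum.cong) auto

lemma Ef_shift_Vp: "v \<in> Vp d \<Longrightarrow> Ef d (theta ^ d + A_to_Kinf v) = (Dc d :: 'a::{finite,field} fls)"
  by (simp add: Ef_add Ef_Vp Dc_def)

lemma nonzero_shift_Vp: "v \<in> Vp d \<Longrightarrow> theta ^ d + A_to_Kinf v \<noteq> (0::'a::{finite,field} fls)"
  using Ef_shift_Vp[of v d] Dc_nonzero[of d, where 'a='a] by force

lemma Ws_cmult: "Ws d (\<lambda>y. c * f y) x = c * Ws d f x"
  unfolding Ws_def by (simp add: sum_distrib_left)

lemma Ws_sum: "Ws d (\<lambda>y. \<Sum>l\<in>L. f l y) x = (\<Sum>l\<in>L. Ws d (f l) x)"
  unfolding Ws_def by (rule sum.swap)

lemma Ws_frob: "Ws d (\<lambda>y. f y ^ card (UNIV::'a set)) x = (Ws d f x :: 'a::{finite,field} fls) ^ card (UNIV::'a set)"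
  unfolding Ws_def by (simp add: frob_sum)

lemma pw_l0: fixes y :: "'a::{finite,field} fls" assumes "y \<noteq> 0"
  shows "inverse y ^ card (UNIV::'a set) * y ^ (card (UNIV::'a set) ^ 0) = inverse y ^ (card (UNIV::'a set) - 1)"
  using pow_mul_inv[of "inverse y" "card (UNIV::'a set)"] assms card_ge2[where 'a='a]
  by (simp add: power_inverse)

lemma pw_lpos: fixes y :: "'a::{finite,field} fls" assumes "y \<noteq> 0" "0 < l"
  shows "inverse y ^ card (UNIV::'a set) * y ^ (card (UNIV::'a set) ^ l)
       = (y ^ (card (UNIV::'a set) ^ (l - 1) - 1)) ^ card (UNIV::'a set)"
proof -
  define q where "q = card (UNIV::'a set)"
  obtain m where l: "l = Suc m" using assms(2) by (cases l) auto
  have "y ^ (q ^ l) = (y ^ (q ^ m)) ^ q" by (simp add: l power_mult[symmetric] mult.commute)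
  hence "inverse y ^ q * y ^ (q ^ l) = (y ^ (q ^ m) * inverse y) ^ q" by (simp add: power_mult_distrib)
  also have "y ^ (q ^ m) * inverse y = y ^ (q ^ m - 1)"
    using pow_mul_inv[OF assms(1), of "q ^ m"] card_ge2[where 'a='a] q_def by simp
  finally show ?thesis by (simp add: q_def l)
qed

lemma G_lt: assumes "j < d"
  shows "(\<Sum>a\<in>monic_deg d. inverse (A_to_Kinf a) ^ card (UNIV::'a set) * Ef j (A_to_Kinf a))
    = bet j 0 * (sig d :: 'a::{finite,field} fls) ^ (card (UNIV::'a set) - 1)"
proof -
  define q where "q = card (UNIV::'a set)"
  define h where "h l y = (if l = 0 then inverse y ^ (q - 1) else (y ^ (q ^ (l - 1) - 1)) ^ q)" for l and y :: "'a fls"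
  have "(\<Sum>a\<in>monic_deg d. inverse (A_to_Kinf a) ^ q * Ef j (A_to_Kinf a))
      = Ws d (\<lambda>y. \<Sum>l\<le>j. bet j l * h l y) (theta ^ d)"
    unfolding monic_Ws[of "\<lambda>y. inverse y ^ q * Ef j y" d, simplified]
  proof (rule Ws_cong)
    fix v :: "'a poly" assume v: "v \<in> Vp d"
    define y where "y = theta ^ d + A_to_Kinf v"
    have y0: "y \<noteq> 0" unfolding y_def using v by (rule nonzero_shift_Vp)
    have "inverse y ^ q * Ef j y = (\<Sum>l\<le>j. bet j l * (inverse y ^ q * y ^ (q ^ l)))"
      unfolding Ef_def q_def by (simp add: sum_distrib_left mult_ac)
    also have "\<dots> = (\<Sum>l\<le>j. bet j l * h l y)"
      using pw_l0[OF y0] pw_lpos[OF y0] unfolding h_def q_def by (intro sum.cong refl) auto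
    finally show "inverse (theta ^ d + A_to_Kinf v) ^ q * Ef j (theta ^ d + A_to_Kinf v) =
         (\<Sum>l\<le>j. bet j l * h l (theta ^ d + A_to_Kinf v))" unfolding y_def .
  qed
  also have "\<dots> = (\<Sum>l\<le>j. bet j l * Ws d (h l) (theta ^ d))"
    by (simp add: Ws_sum Ws_cmult)
  also have "\<dots> = (\<Sum>l\<in>{0}. bet j l * Ws d (h l) (theta ^ d))"
  proof (rule sum.mono_neutral_cong_right)
    show "\<forall>l\<in>{..j} - {0}. bet j l * Ws d (h l) (theta ^ d) = 0"
    proof
      fix l assume "l \<in> {..j} - {0}"
      hence l: "0 < l" "l - 1 < d" using assms by auto
      have "Ws d (h l) (theta ^ d) = Ws d (\<lambda>y. (y ^ (q ^ (l - 1) - 1)) ^ q) (theta ^ d)"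
        unfolding h_def using l by simp
      also have "\<dots> = (Ws d (\<lambda>y. y ^ (q ^ (l - 1) - 1)) (theta ^ d)) ^ q"
        unfolding q_def by (rule Ws_frob)
      also have "Ws d (\<lambda>y. y ^ (q ^ (l - 1) - 1)) (theta ^ d :: 'a fls) = 0"
        unfolding q_def by (rule Ws_vanish) (use l in simp)
      finally show "bet j l * Ws d (h l) (theta ^ d) = 0" using card_ge2[where 'a='a] q_def by simp
    qed
  qed auto
  also have "\<dots> = bet j 0 * Ws d (\<lambda>y. inverse y ^ (q - 1)) (theta ^ d)"
  proof -
    have "h 0 = (\<lambda>y. inverse y ^ (q - 1))" by (rule ext) (simp add: h_def)
    thus ?thesis by simp
  qed
  also have "\<dots> = bet j 0 * sig d ^ (q - 1)"
    using pow_sum_qm1[of d, where 'a='a] unfolding pow_sum_Ws q_def by simp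
  finally show ?thesis unfolding q_def .
qed

lemma G_d:
  "(\<Sum>a\<in>monic_deg d. inverse (A_to_Kinf a) ^ card (UNIV::'a set) * Ef d (A_to_Kinf a))
    = Dc d * (sig d :: 'a::{finite,field} fls) ^ card (UNIV::'a set)"
proof -
  have "(\<Sum>a\<in>monic_deg d. inverse (A_to_Kinf a) ^ card (UNIV::'a set) * Ef d (A_to_Kinf a))
      = Ws d (\<lambda>y. Dc d * inverse y ^ card (UNIV::'a set)) (theta ^ d :: 'a fls)"
    unfolding monic_Ws[of "\<lambda>y. inverse y ^ card (UNIV::'a set) * Ef d y" d, simplified]
    by (rule Ws_cong) (simp add: Ef_shift_Vp mult.commute)
  also have "\<dots> = Dc d * pow_sum (card (UNIV::'a set)) d"
    unfolding pow_sum_Ws Ws_cmult ..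
  finally show ?thesis by (simp add: pow_sum_q)
qed

lemma T_value:
  "(\<Sum>a\<in>monic_deg d. inverse (A_to_Kinf a) ^ card (UNIV::'a set) * psi d (A_to_Kinf a :: 'a::{finite,field} fls))
   = pow_sum (card (UNIV::'a set) - 1) d * (\<Sum>e\<le>d. pow_sum 1 e)"
proof -
  define q where "q = card (UNIV::'a set)"
  have "(\<Sum>a\<in>monic_deg d. inverse (A_to_Kinf a) ^ q * psi d (A_to_Kinf a :: 'a fls))
      = (\<Sum>j\<le>d. inverse (Dc j) * (\<Sum>a\<in>monic_deg d. inverse (A_to_Kinf a) ^ q * Ef j (A_to_Kinf a :: 'a fls)))"
    unfolding psi_def sum_distrib_left by (subst sum.swap) (simp add: mult_ac)
  also have "\<dots> = (\<Sum>j<d. inverse (Dc j) * (bet j 0 * sig d ^ (q - 1))) + inverse (Dc d) * (Dc d * (sig d :: 'a fls) ^ q)"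
    unfolding q_def by (simp add: lessThan_Suc_atMost[symmetric] G_lt G_d)
  also have "\<dots> = sig d ^ (q - 1) * (\<Sum>j<d. sig j) + sig d ^ (q - 1) * sig d"
  proof -
    have "inverse (Dc d) * (Dc d * (sig d :: 'a fls) ^ q) = sig d ^ q" using Dc_nonzero[of d, where 'a='a] by simp
    also have "\<dots> = sig d ^ (q - 1) * sig d" using pow_qm1_mult[of q "sig d :: 'a fls"] card_ge2[where 'a='a] q_def by simp
    finally have X: "inverse (Dc d) * (Dc d * (sig d :: 'a fls) ^ q) = sig d ^ (q - 1) * sig d" .
    have Y: "(\<Sum>j<d. inverse (Dc j) * (bet j 0 * sig d ^ (q - 1))) = sig d ^ (q - 1) * (\<Sum>j<d. (sig j :: 'a fls))"
      unfolding sum_distrib_left by (rule sum.cong) (simp_all add: sig_def mult_ac)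
    show ?thesis unfolding X Y ..
  qed
  also have "\<dots> = pow_sum (q - 1) d * (\<Sum>e\<le>d. pow_sum 1 e)"
  proof -
    have e1: "pow_sum 1 = (sig :: nat \<Rightarrow> 'a fls)" by (rule ext) (rule pow_sum_1)
    show ?thesis unfolding e1 q_def pow_sum_qm1 by (simp add: lessThan_Suc_atMost[symmetric] distrib_left)
  qed
  finally show ?thesis unfolding q_def .
qed


definition sm :: "int \<Rightarrow> 'a::{finite,field} fls \<Rightarrow> bool" where
  "sm n x \<longleftrightarrow> (\<forall>j<n. fls_nth x j = 0)"

lemma sm_zero [simp]: "sm n 0" by (simp add: sm_def)
lemma sm_add: "sm n x \<Longrightarrow> sm n y \<Longrightarrow> sm n (x + y)" by (simp add: sm_def)
lemma sm_diff: "sm n x \<Longrightarrow> sm n y \<Longrightarrow> sm n (x - y)" by (simp add: sm_def)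
lemma sm_uminus: "sm n x \<Longrightarrow> sm n (- x)" by (simp add: sm_def)
lemma sm_mono: "sm n x \<Longrightarrow> m \<le> n \<Longrightarrow> sm m x" by (simp add: sm_def)
lemma sm_sum: "(\<And>i. i \<in> A \<Longrightarrow> sm n (f i)) \<Longrightarrow> sm n (\<Sum>i\<in>A. f i)"
  by (induction A rule: infinite_finite_induct) (auto intro: sm_add)

lemma sm_iff: assumes "x \<noteq> 0" shows "sm n x \<longleftrightarrow> n \<le> fls_subdegree x"
proof
  assume "sm n x"
  hence "\<And>k. k < n \<Longrightarrow> fls_nth x k = 0" by (simp add: sm_def)
  thus "n \<le> fls_subdegree x" by (rule fls_subdegree_geI[OF assms])
next
  assume "n \<le> fls_subdegree x"
  thus "sm n x" unfolding sm_def by (auto intro: fls_eq0_below_subdegree)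
qed

lemma sm_mult: assumes "sm m x" "sm n y" shows "sm (m + n) (x * y)"
proof (cases "x = 0 \<or> y = 0")
  case True thus ?thesis by auto
next
  case False
  hence "m \<le> fls_subdegree x" "n \<le> fls_subdegree y" using assms sm_iff by auto
  moreover have xy: "x * y \<noteq> 0" using False by simp
  moreover have "fls_subdegree (x * y) = fls_subdegree x + fls_subdegree y" using False by simp
  ultimately show ?thesis using sm_iff[OF xy] by simp
qed

lemma sm_pow: "sm n x \<Longrightarrow> sm (int k * n) (x ^ k)"
proof (induction k)
  case 0 thus ?case by (simp add: sm_def)
next
  case (Suc k)
  have "sm (n + int k * n) (x * x ^ k)" by (rule sm_mult) (use Suc in auto)
  thus ?case by (simp add: algebra_simps)
qed

lemma sm_inverse: assumes "x \<noteq> 0" "fls_subdegree x \<le> - n" shows "sm n (inverse x)"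
  using assms sm_iff[of "inverse x" n] by simp

lemma br_subdeg: "n > 0 \<Longrightarrow> fls_subdegree (br n :: 'a::{finite,field} fls) \<le> -1"
proof -
  assume n: "n > 0"
  have "card (UNIV::'a set) ^ n \<ge> 2" using card_ge2[where 'a='a] n
    by (metis le_trans self_le_power not_gr0 numeral_le_one_iff semiring_norm(69) one_le_numeral)
  hence h2: "int (card (UNIV::'a set)) ^ n \<ge> 2" by (metis of_nat_le_iff of_nat_numeral of_nat_power)
  hence "fls_nth (br n :: 'a fls) (- int (card (UNIV::'a set) ^ n)) \<noteq> 0"
    unfolding br_def by (simp add: theta_def)
  hence "fls_subdegree (br n :: 'a fls) \<le> - int (card (UNIV::'a set) ^ n)" by (rule fls_subdegree_leI)
  thus ?thesis using h2 by simp
qed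

lemma sm_inv_br: "n > 0 \<Longrightarrow> sm 1 (inverse (br n :: 'a::{finite,field} fls))"
  by (intro sm_inverse br_nonzero) (auto simp: br_subdeg)

lemma sm_sig: "sm (int d) (sig d :: 'a::{finite,field} fls)"
proof (induction d)
  case 0 thus ?case by (simp add: sig_0 sm_def)
next
  case (Suc d)
  have "sm (int d + 1) (sig d * inverse (br (Suc d) :: 'a fls))"
    by (rule sm_mult) (use Suc sm_inv_br in auto)
  thus ?case by (simp add: sig_Suc sm_uminus add.commute)
qed

definition conv :: "(nat \<Rightarrow> 'a::{finite,field} fls) \<Rightarrow> 'a fls \<Rightarrow> bool" where
  "conv X L \<longleftrightarrow> (\<forall>N. \<exists>M. \<forall>n\<ge>M. sm N (X n - L))"

lemma conv_LIMSEQ: assumes "conv X L" shows "X \<longlonglongrightarrow> L"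
proof (rule metric_LIMSEQ_I)
  fix r :: real assume r: "0 < r"
  obtain N :: nat where N: "inverse r < 2 ^ N" using real_arch_pow[of 2 "inverse r"] by auto
  hence N': "inverse (2 ^ N) < r" using r by (metis inverse_less_imp_less inverse_inverse_eq positive_imp_inverse_positive)
  obtain M where M: "\<forall>n\<ge>M. sm (int N) (X n - L)" using assms unfolding conv_def by blast
  have "dist (X n) L < r" if "n \<ge> M" for n
  proof (cases "X n = L")
    case True thus ?thesis using r by simp
  next
    case False
    hence nz: "X n - L \<noteq> 0" by simp
    have "int N \<le> fls_subdegree (X n - L)" using M that sm_iff[OF nz] by blast
    hence "dist (X n) L = inverse (2 ^ nat (fls_subdegree (X n - L)))"
      using False by (simp add: dist_fls_def)
    also have "\<dots> \<le> inverse (2 ^ N)"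
      using \<open>int N \<le> fls_subdegree (X n - L)\<close> by (intro le_imp_inverse_le) (auto intro: power_increasing)
    finally show ?thesis using N' by simp
  qed
  thus "\<exists>no. \<forall>n\<ge>no. dist (X n) L < r" by blast
qed

lemma conv_sums: "conv (\<lambda>n. \<Sum>i<n. f i) s \<Longrightarrow> f sums s"
  unfolding sums_def by (rule conv_LIMSEQ)

lemma conv_suminf: "conv (\<lambda>n. \<Sum>i<n. f i) s \<Longrightarrow> suminf f = s"
  by (rule sums_unique[symmetric], rule conv_sums)

lemma conv_unique: "conv X a \<Longrightarrow> conv X b \<Longrightarrow> a = b"
  using conv_LIMSEQ LIMSEQ_unique by blast

lemma conv_add: assumes "conv X a" "conv Y b" shows "conv (\<lambda>n. X n + Y n) (a + b)"
  unfolding conv_def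
proof
  fix N
  obtain M1 where "\<forall>n\<ge>M1. sm N (X n - a)" using assms(1) unfolding conv_def by blast
  moreover obtain M2 where "\<forall>n\<ge>M2. sm N (Y n - b)" using assms(2) unfolding conv_def by blast
  ultimately have "\<forall>n\<ge>max M1 M2. sm N (X n + Y n - (a + b))"
  proof (intro allI impI)
    fix n assume "\<forall>n\<ge>M1. sm N (X n - a)" "\<forall>n\<ge>M2. sm N (Y n - b)" "max M1 M2 \<le> n"
    hence "sm N ((X n - a) + (Y n - b))" by (intro sm_add) auto
    moreover have "(X n - a) + (Y n - b) = X n + Y n - (a + b)" by simp
    ultimately show "sm N (X n + Y n - (a + b))" by simp
  qed
  thus "\<exists>M. \<forall>n\<ge>M. sm N (X n + Y n - (a + b))" by blast
qed

lemma conv_mult: assumes "conv X a" "conv Y b" "\<And>n. sm 0 (X n)" "sm 0 b"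
  shows "conv (\<lambda>n. X n * Y n) (a * b)"
  unfolding conv_def
proof
  fix N
  obtain M1 where M1: "\<forall>n\<ge>M1. sm N (X n - a)" using assms(1) unfolding conv_def by blast
  obtain M2 where M2: "\<forall>n\<ge>M2. sm N (Y n - b)" using assms(2) unfolding conv_def by blast
  have "sm N (X n * Y n - a * b)" if "n \<ge> max M1 M2" for n
  proof -
    have "X n * Y n - a * b = X n * (Y n - b) + (X n - a) * b" by (simp add: algebra_simps)
    moreover have "sm (0 + N) (X n * (Y n - b))" by (rule sm_mult) (use assms(3) M2 that in auto)
    moreover have "sm (N + 0) ((X n - a) * b)" by (rule sm_mult) (use assms(4) M1 that in auto)
    ultimately show ?thesis by (auto intro: sm_add)
  qed
  thus "\<exists>M. \<forall>n\<ge>M. sm N (X n * Y n - a * b)" by blast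
qed

lemma conv_cmult: assumes "conv X a" "sm 0 c" shows "conv (\<lambda>n. c * X n) (c * a)"
  unfolding conv_def
proof
  fix N
  obtain M where M: "\<forall>n\<ge>M. sm N (X n - a)" using assms(1) unfolding conv_def by blast
  have "sm N (c * X n - c * a)" if "n \<ge> M" for n
  proof -
    have "sm (0 + N) (c * (X n - a))" by (rule sm_mult) (use assms(2) M that in auto)
    thus ?thesis by (simp add: right_diff_distrib)
  qed
  thus "\<exists>M. \<forall>n\<ge>M. sm N (c * X n - c * a)" by blast
qed

lemma conv_frob: fixes X :: "nat \<Rightarrow> 'a::{finite,field} fls" assumes "conv X a"
  shows "conv (\<lambda>n. X n ^ card (UNIV::'a set)) (a ^ card (UNIV::'a set))"
  unfolding conv_def
proof
  fix N
  obtain M where M: "\<forall>n\<ge>M. sm (max N 0) (X n - a)" using assms unfolding conv_def by blast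
  have "sm N (X n ^ card (UNIV::'a set) - a ^ card (UNIV::'a set))" if "n \<ge> M" for n
  proof -
    have "sm (int (card (UNIV::'a set)) * max N 0) ((X n - a) ^ card (UNIV::'a set))"
      by (rule sm_pow) (use M that in auto)
    moreover have "N \<le> int (card (UNIV::'a set)) * max N 0"
      using card_ge2[where 'a='a] by (cases "N \<le> 0") (auto simp: max_def intro: order.trans[of _ "1 * N"])
    moreover have "(X n - a) ^ card (UNIV::'a set) = X n ^ card (UNIV::'a set) - a ^ card (UNIV::'a set)"
      by (rule frob_diff)
    ultimately show ?thesis using sm_mono by metis
  qed
  thus "\<exists>M. \<forall>n\<ge>M. sm N (X n ^ card (UNIV::'a set) - a ^ card (UNIV::'a set))" by blast
qed

lemma conv_shift: "conv (\<lambda>n. X (Suc n)) a \<Longrightarrow> conv X a"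
  unfolding conv_def by (metis Suc_le_D Suc_le_mono)

lemma conv_sm0: assumes "conv X a" "\<And>n. sm 0 (X n)" shows "sm 0 a"
proof -
  obtain M where "sm 0 (X M - a)" using assms(1) unfolding conv_def by blast
  hence "sm 0 (X M - (X M - a))" using assms(2) sm_diff by blast
  thus ?thesis by simp
qed

lemma conv_exists: fixes f :: "nat \<Rightarrow> 'a::{finite,field} fls"
  assumes "\<And>d. sm (int d) (f d)"
  shows "\<exists>s. conv (\<lambda>n. \<Sum>i<n. f i) s"
proof -
  define g where "g j = fls_nth (\<Sum>i<Suc (nat j). f i) j" for j
  have g0: "\<forall>n<0. g n = 0"
  proof (intro allI impI)
    fix n :: int assume "n < 0"
    hence "fls_nth (f 0) n = 0" using assms[of 0] by (simp add: sm_def)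
    thus "g n = 0" unfolding g_def using \<open>n < 0\<close> by (simp add: fls_nth_sum)
  qed
  define s where "s = Abs_fls g"
  have sn: "fls_nth s j = g j" for j unfolding s_def by (rule nth_Abs_fls_lower_bound[OF g0])
  have "conv (\<lambda>n. \<Sum>i<n. f i) s"
    unfolding conv_def
  proof
    fix N
    have "sm N ((\<Sum>i<n. f i) - s)" if "n \<ge> Suc (nat N)" for n
      unfolding sm_def
    proof (intro allI impI)
      fix j assume j: "j < N"
      show "fls_nth ((\<Sum>i<n. f i) - s) j = 0"
      proof (cases "j < 0")
        case True
        have "fls_nth (f i) j = 0" for i using assms[of i] True by (simp add: sm_def)
        thus ?thesis using True g0 by (simp add: sn fls_nth_sum)
      next
        case False
        have z: "fls_nth (f i) j = 0" if "i > nat j" for i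
          using assms[of i] that False by (simp add: sm_def)
        have "fls_nth (\<Sum>i<n. f i) j = (\<Sum>i<Suc (nat j). fls_nth (f i) j)"
          unfolding fls_nth_sum
          by (rule sum.mono_neutral_right) (use that j False z in auto)
        thus ?thesis by (simp add: sn g_def fls_nth_sum)
      qed
    qed
    thus "\<exists>M. \<forall>n\<ge>M. sm N ((\<Sum>i<n. f i) - s)" by blast
  qed
  thus ?thesis by blast
qed


lemma br_Suc_Suc: "br (Suc (Suc d)) = br (Suc d) ^ card (UNIV::'a set) + (br 1 :: 'a::{finite,field} fls)"
proof -
  have "br (Suc d) ^ card (UNIV::'a set) = theta ^ (card (UNIV::'a set) ^ Suc (Suc d)) - (theta :: 'a fls) ^ card (UNIV::'a set)"
    unfolding br_def by (simp add: frob_diff power_mult[symmetric] mult.commute)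
  thus ?thesis unfolding br_def by simp
qed

lemma minus_pow_qm1: "(- x) ^ (card (UNIV::'a set) - 1) = (x :: 'a::{finite,field} fls) ^ (card (UNIV::'a set) - 1)"
proof -
  have "(- x) ^ (card (UNIV::'a set) - 1) = (- 1) ^ (card (UNIV::'a set) - 1) * x ^ (card (UNIV::'a set) - 1)"
    by (rule power_minus)
  also have "(- 1 :: 'a fls) ^ (card (UNIV::'a set) - 1) = 1" by (rule minus_one_pow_qm1)
  finally show ?thesis by simp
qed

lemma Psi: "(\<Sum>e\<le>d. sig e ^ (card (UNIV::'a set) - 1))
   = sig d ^ (card (UNIV::'a set) - 1) * br (Suc d) * inverse (br 1 :: 'a::{finite,field} fls)"
proof (induction d)
  case 0 thus ?case using br_nonzero[of 1, where 'a='a] by (simp add: sig_0)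
next
  case (Suc d)
  define q where "q = card (UNIV::'a set)"
  define s where "s = (sig d :: 'a fls) ^ (q - 1)"
  define B where "B = (br (Suc d) :: 'a fls)"
  define B1 where "B1 = (br 1 :: 'a fls)"
  define P where "P = B ^ (q - 1)"
  have B0: "B \<noteq> 0" unfolding B_def by (rule br_nonzero) simp
  have B10: "B1 \<noteq> 0" unfolding B1_def by (rule br_nonzero) simp
  have P0: "P \<noteq> 0" unfolding P_def using B0 by simp
  have PB: "B ^ q = P * B" unfolding P_def q_def using pow_qm1_mult[of "card (UNIV::'a set)" B] card_ge2[where 'a='a]
    by (simp add: mult.commute)
  have sS: "sig (Suc d) ^ (q - 1) = s * inverse P"
    unfolding sig_Suc q_def minus_pow_qm1 s_def P_def B_def q_def by (simp add: power_mult_distrib power_inverse)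
  have IH: "(\<Sum>e\<le>d. (sig e :: 'a fls) ^ (q - 1)) = s * B * inverse B1"
    using Suc.IH unfolding q_def s_def B_def B1_def .
  have "(\<Sum>e\<le>Suc d. (sig e :: 'a fls) ^ (q - 1)) = (\<Sum>e\<le>d. sig e ^ (q - 1)) + sig (Suc d) ^ (q - 1)"
    by (rule sum.atMost_Suc)
  also have "\<dots> = s * B * inverse B1 + s * inverse P" unfolding IH sS ..
  also have "\<dots> = (s * inverse P) * (B ^ q + B1) * inverse B1"
    unfolding PB using B10 P0 by (simp add: field_simps)
  also have "\<dots> = sig (Suc d) ^ (q - 1) * br (Suc (Suc d)) * inverse (br 1)"
    by (simp only: sS) (simp add: br_Suc_Suc B_def B1_def q_def)
  finally show ?case unfolding q_def .
qed

lemma c_Suc: "sig (Suc d) * (\<Sum>e<Suc d. sig e ^ (card (UNIV::'a set) - 1))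
   = (sig d :: 'a::{finite,field} fls) ^ card (UNIV::'a set) * inverse (theta - theta ^ card (UNIV::'a set))"
proof -
  define q where "q = card (UNIV::'a set)"
  have B0: "br (Suc d) \<noteq> (0::'a fls)" by (rule br_nonzero) simp
  have B10: "br 1 \<noteq> (0::'a fls)" by (rule br_nonzero) simp
  have t: "theta - theta ^ q = - (br 1 :: 'a fls)" unfolding br_def q_def by simp
  have ss: "sig d * sig d ^ (q - 1) = (sig d :: 'a fls) ^ q"
    using pow_qm1_mult[of q "sig d :: 'a fls"] card_ge2[where 'a='a] q_def by (simp add: mult.commute)
  have "sig (Suc d) * (\<Sum>e<Suc d. sig e ^ (q - 1))
      = - (sig d * inverse (br (Suc d))) * (sig d ^ (q - 1) * br (Suc d) * inverse (br 1 :: 'a fls))"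
    unfolding lessThan_Suc_atMost sig_Suc q_def Psi ..
  also have "\<dots> = - (sig d * sig d ^ (q - 1) * inverse (br 1))"
    using B0 by (simp add: field_simps)
  also have "\<dots> = sig d ^ q * inverse (theta - theta ^ q)"
    unfolding ss t by simp
  finally show ?thesis unfolding q_def .
qed

lemma cauchy_partial:
  fixes s t :: "nat \<Rightarrow> 'b::comm_ring"
  shows "(\<Sum>d<n. s d) * (\<Sum>d<n. t d)
    = (\<Sum>d<n. s d * (\<Sum>e<d. t e) + t d * (\<Sum>e<d. s e) + s d * t d)"
  by (induction n) (simp_all add: algebra_simps)


theorem mainTheorem16:
  assumes "card (UNIV :: 'a::{finite,field} set) > 2"
  shows "(zetaC2_star (card (UNIV :: 'a set) - 1) 1 :: 'a fls) = zetaC2 (card (UNIV :: 'a set) - 1) 1 + zetaC 1 ^ card (UNIV :: 'a set)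
    \<and> zetaC2 (card (UNIV :: 'a set) - 1) 1 + zetaC 1 ^ card (UNIV :: 'a set)
        = (zetaC 1 * zetaC (card (UNIV :: 'a set) - 1) - zetaC2 1 (card (UNIV :: 'a set) - 1) :: 'a fls)
    \<and> (zetaC 1 * zetaC (card (UNIV :: 'a set) - 1) - zetaC2 1 (card (UNIV :: 'a set) - 1) :: 'a fls)
        = zetaC 1 * (zetaC (card (UNIV :: 'a set) - 1) - zetaC 1 ^ (card (UNIV :: 'a set) - 1) / (theta - theta ^ card (UNIV :: 'a set)))
    \<and> (zetaC2_star (card (UNIV :: 'a set) - 1) 1 :: 'a fls)
        = (\<Sum>d. skew_eval (skew_sum (\<lambda>a.
              skew_scal (inverse (A_to_Kinf a) ^ card (UNIV :: 'a set)) (carlitz a)) (monic_deg d :: 'a poly set)))"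
proof -
  let ?q = "card (UNIV :: 'a set)"
  have q2: "?q \<ge> 2" by (rule card_ge2)
  define \<sigma> where "\<sigma> = (pow_sum 1 :: nat \<Rightarrow> 'a fls)"
  define \<tau> where "\<tau> = (pow_sum (?q - 1) :: nat \<Rightarrow> 'a fls)"
  have \<sigma>s: "\<sigma> d = sig d" for d unfolding \<sigma>_def by (rule pow_sum_1)
  have \<tau>s: "\<tau> d = sig d ^ (?q - 1)" for d unfolding \<tau>_def by (rule pow_sum_qm1)
  have sm\<sigma>: "sm (int d) (\<sigma> d)" for d unfolding \<sigma>s by (rule sm_sig)
  have sm\<tau>: "sm (int d) (\<tau> d)" for d
  proof -
    have "sm (int (?q - 1) * int d) (\<tau> d)" unfolding \<tau>s by (rule sm_pow[OF sm_sig])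
    moreover have "int d \<le> int (?q - 1) * int d" using q2 by (simp add: mult_le_cancel_right1)
    ultimately show ?thesis by (rule sm_mono)
  qed
  have sm0: "sm 0 (\<Sum>e<d. f e)" if "\<And>e. sm (int e) (f e)" for f :: "nat \<Rightarrow> 'a fls" and d
  proof (rule sm_sum)
    fix e show "sm 0 (f e)" using sm_mono[OF that[of e]] by simp
  qed
  define a where "a d = \<tau> d * (\<Sum>e<d. \<sigma> e)" for d
  define b where "b d = \<sigma> d ^ ?q" for d
  define c where "c d = \<sigma> d * (\<Sum>e<d. \<tau> e)" for d
  have sma: "sm (int d) (a d)" for d
    using sm_mult[OF sm\<tau>[of d] sm0[OF sm\<sigma>, of d]] unfolding a_def by simp
  have smc: "sm (int d) (c d)" for d
    using sm_mult[OF sm\<sigma>[of d] sm0[OF sm\<tau>, of d]] unfolding c_def by simp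
  have smb: "sm (int d) (b d)" for d
  proof -
    have "sm (int ?q * int d) (b d)" unfolding b_def by (rule sm_pow[OF sm\<sigma>])
    moreover have "int d \<le> int ?q * int d" using q2 by (simp add: mult_le_cancel_right1)
    ultimately show ?thesis by (rule sm_mono)
  qed
  obtain Z1 where Z1: "conv (\<lambda>n. \<Sum>i<n. \<sigma> i) Z1" using conv_exists[OF sm\<sigma>] by blast
  obtain Zt where Zt: "conv (\<lambda>n. \<Sum>i<n. \<tau> i) Zt" using conv_exists[OF sm\<tau>] by blast
  obtain A where A: "conv (\<lambda>n. \<Sum>i<n. a i) A" using conv_exists[OF sma] by blast
  obtain C where C: "conv (\<lambda>n. \<Sum>i<n. c i) C" using conv_exists[OF smc] by blast
  have B: "conv (\<lambda>n. \<Sum>i<n. b i) (Z1 ^ ?q)"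
  proof -
    have "(\<lambda>n. \<Sum>i<n. b i) = (\<lambda>n. (\<Sum>i<n. \<sigma> i) ^ ?q)" unfolding b_def by (simp add: frob_sum)
    thus ?thesis using conv_frob[OF Z1] by simp
  qed
  have z1: "zetaC 1 = Z1" unfolding zetaC_def \<sigma>_def[symmetric] by (rule conv_suminf[OF Z1])
  have zt: "zetaC (?q - 1) = Zt" unfolding zetaC_def \<tau>_def[symmetric] by (rule conv_suminf[OF Zt])
  have za: "zetaC2 (?q - 1) 1 = A"
  proof -
    have "zetaC2 (?q - 1) 1 = suminf a" unfolding zetaC2_def a_def \<sigma>_def \<tau>_def ..
    thus ?thesis using conv_suminf[OF A] by simp
  qed
  have zc: "zetaC2 1 (?q - 1) = C"
  proof -
    have "zetaC2 1 (?q - 1) = suminf c" unfolding zetaC2_def c_def \<sigma>_def \<tau>_def ..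
    thus ?thesis using conv_suminf[OF C] by simp
  qed
  have ab: "\<tau> d * (\<Sum>e\<le>d. \<sigma> e) = a d + b d" for d
  proof -
    have "\<tau> d * \<sigma> d = b d" unfolding b_def \<tau>s \<sigma>s
      using pow_qm1_mult[of ?q "sig d :: 'a fls"] q2 by simp
    thus ?thesis unfolding a_def by (simp add: lessThan_Suc_atMost[symmetric] distrib_left)
  qed
  have zs: "zetaC2_star (?q - 1) 1 = A + Z1 ^ ?q"
  proof -
    have "zetaC2_star (?q - 1) 1 = (\<Sum>d. a d + b d)"
      unfolding zetaC2_star_def \<sigma>_def[symmetric] \<tau>_def[symmetric] ab ..
    also have "\<dots> = A + Z1 ^ ?q"
      by (rule conv_suminf) (use conv_add[OF A B] in \<open>simp add: sum.distrib\<close>)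
    finally show ?thesis .
  qed
  have cauchy: "Z1 * Zt = C + A + Z1 ^ ?q"
  proof -
    have smp: "sm 0 (\<Sum>i<n. \<sigma> i)" for n by (rule sm0[OF sm\<sigma>])
    have smZt: "sm 0 Zt" by (rule conv_sm0[OF Zt]) (rule sm0[OF sm\<tau>])
    have c1: "conv (\<lambda>n. (\<Sum>i<n. \<sigma> i) * (\<Sum>i<n. \<tau> i)) (Z1 * Zt)"
      by (rule conv_mult[OF Z1 Zt smp smZt])
    have eq: "(\<Sum>i<n. \<sigma> i) * (\<Sum>i<n. \<tau> i) = (\<Sum>i<n. c i) + (\<Sum>i<n. a i) + (\<Sum>i<n. b i)" for n
    proof -
      have "\<sigma> d * \<tau> d = b d" for d unfolding b_def \<tau>s \<sigma>s
        using pow_qm1_mult[of ?q "sig d :: 'a fls"] q2 by (simp add: mult.commute)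
      thus ?thesis unfolding cauchy_partial a_def c_def by (simp add: sum.distrib)
    qed
    have c2: "conv (\<lambda>n. (\<Sum>i<n. \<sigma> i) * (\<Sum>i<n. \<tau> i)) (C + A + Z1 ^ ?q)"
      unfolding eq by (intro conv_add C A B)
    show ?thesis using conv_unique[OF c1 c2] .
  qed
  have cval: "C = Z1 ^ ?q * inverse (theta - theta ^ ?q)"
  proof -
    define \<kappa> where "\<kappa> = inverse (theta - theta ^ ?q :: 'a fls)"
    have sk: "sm 0 \<kappa>"
    proof -
      have "\<kappa> = - inverse (br 1)" unfolding \<kappa>_def br_def by (simp flip: inverse_minus_eq)
      thus ?thesis using sm_inv_br[of 1, where 'a='a] by (auto intro: sm_uminus sm_mono)
    qed
    have cS: "c (Suc d) = b d * \<kappa>" for d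
      unfolding c_def b_def \<sigma>s \<tau>s \<kappa>_def by (rule c_Suc)
    have "(\<Sum>i<Suc n. c i) = \<kappa> * (\<Sum>i<n. b i)" for n
      unfolding sum.lessThan_Suc_shift cS by (simp add: c_def sum_distrib_left mult.commute)
    hence "conv (\<lambda>n. \<Sum>i<Suc n. c i) (\<kappa> * Z1 ^ ?q)" using conv_cmult[OF B sk] by simp
    hence "conv (\<lambda>n. \<Sum>i<n. c i) (\<kappa> * Z1 ^ ?q)" by (rule conv_shift)
    thus ?thesis using conv_unique[OF C] unfolding \<kappa>_def by (simp add: mult.commute)
  qed
  have rhs4: "(\<Sum>d. skew_eval (skew_sum (\<lambda>a.
              skew_scal (inverse (A_to_Kinf a) ^ ?q) (carlitz a)) (monic_deg d :: 'a poly set)))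
      = zetaC2_star (?q - 1) 1"
    unfolding zetaC2_star_def T_eval T_value ..
  have p3: "Z1 * Zt - C = Z1 * (Zt - Z1 ^ (?q - 1) / (theta - theta ^ ?q))"
  proof -
    have "Z1 * Z1 ^ (?q - 1) = Z1 ^ ?q" using pow_qm1_mult[of ?q Z1] q2 by (simp add: mult.commute)
    thus ?thesis unfolding cval by (simp add: divide_inverse right_diff_distrib mult.assoc[symmetric])
  qed
  show ?thesis unfolding z1 zt za zc zs using cauchy p3 rhs4 zs by (simp add: algebra_simps)
qed


end
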